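(* Let $(K,\Delta\cup\{D\})$ be a differential field of characteristic zero with commuting derivations $\Delta=\{\delta_1,\dots,\delta_m\}$ and $D$, such that $(K,\Delta)\models DCF_{0,m}$. Let $\Lambda$ be a characteristic set of a prime $\Delta$-ideal of $K\{x_1,\dots,x_n\}$, let $V=\mathcal V([\Lambda]:H_\Lambda^\infty)\subseteq K^n$, and let $\bar a\in \mathcal V(\Lambda)\setminus\mathcal V(H_\Lambda)$. Then $\bar a\in V$, and for every $\bar b\in K^n$ we have $(\bar a,\bar b)\in\tau V$ if and only if $(\bar a,\bar b)\in\mathcal V(f,\tau f:\ f\in\Lambda)$.
   Context: $K\{x_1,\dots,x_n\}$ is the ring of $\Delta$-polynomials over $K$, $\Theta$ the monoid of operators $\delta_1^{e_1}\cdots\delta_m^{e_m}$, $\mathcal V(S)$ the common zero set in $K^n$ (or $K^{2n}$) of a set $S$ of $\Delta$-polynomials. A characteristic set is taken with respect to a fixed ranking; $H_\Lambda$ is the product of the separants and initials of the elements of $\Lambda$; $[\Lambda]$ is the $\Delta$-ideal generated by $\Lambda$ and $[\Lambda]:H_\Lambda^\infty=\{f: H_\Lambda^\ell f\in[\Lambda]\text{ for some }\ell\}$. For $f\in K\{\bar x\}$, $\tau f(\bar x,\bar y)=f^{D}(\bar x)+\sum_{i=1}^n\sum_{\theta\in\Theta}\frac{\partial f}{\partial(\theta x_i)}(\bar x)\,\theta y_i$, where $f^D$ is obtained by applying $D$ to the coefficients of $f$. For a $\Delta$-closed $V\subseteq K^n$ with ideal $\mathcal I(V/K)$ of $\Delta$-polynomials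 over $K$ vanishing on $V$, the prolongation is $\tau V=\mathcal V(f,\tau f:\ f\in\mathcal I(V/K))\subseteq K^{2n}$. *)

theory Defs
  imports Main "HOL-Library.Poly_Mapping"
begin

text \<open>A derivative operator theta = delta_1^e_1 ... delta_m^e_m is an exponent vector
  e :: nat =>0 nat (indices 0..m-1). A differential indeterminate theta x_i is a pair (i, e).
  Delta-polynomials over K are ordinary polynomials (finitely supported coefficient maps on
  monomials) in the indeterminates theta x_i.\<close>

type_synonym dvar = "nat \<times> (nat \<Rightarrow>\<^sub>0 nat)"
type_synonym 'a dpoly = "(dvar \<Rightarrow>\<^sub>0 nat) \<Rightarrow>\<^sub>0 'a"

definition is_derivation :: "('a::field \<Rightarrow> 'a) \<Rightarrow> bool" where
  "is_derivation d \<longleftrightarrow> (\<forall>x y. d (x + y) = d x + d y \<and> d (x * y) = d x * y + x * d y)"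

definition commuting_derivations :: "nat \<Rightarrow> (nat \<Rightarrow> 'a::field \<Rightarrow> 'a) \<Rightarrow> ('a \<Rightarrow> 'a) \<Rightarrow> bool" where
  "commuting_derivations m \<delta> D \<longleftrightarrow>
     (\<forall>j<m. is_derivation (\<delta> j)) \<and> is_derivation D \<and>
     (\<forall>j<m. \<forall>k<m. \<delta> j \<circ> \<delta> k = \<delta> k \<circ> \<delta> j) \<and> (\<forall>j<m. \<delta> j \<circ> D = D \<circ> \<delta> j)"

fun theta_app_aux :: "(nat \<Rightarrow> 'a \<Rightarrow> 'a) \<Rightarrow> (nat \<Rightarrow>\<^sub>0 nat) \<Rightarrow> nat \<Rightarrow> 'a \<Rightarrow> 'a" where
  "theta_app_aux \<delta> e 0 c = c"
| "theta_app_aux \<delta> e (Suc k) c = (\<delta> k ^^ Poly_Mapping.lookup e k) (theta_app_aux \<delta> e k c)"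

definition theta_app :: "nat \<Rightarrow> (nat \<Rightarrow> 'a \<Rightarrow> 'a) \<Rightarrow> (nat \<Rightarrow>\<^sub>0 nat) \<Rightarrow> 'a \<Rightarrow> 'a" where
  "theta_app m \<delta> e c = theta_app_aux \<delta> e m c"

definition dvars :: "'a::zero dpoly \<Rightarrow> dvar set" where
  "dvars f = (\<Union>\<mu>\<in>Poly_Mapping.keys f. Poly_Mapping.keys \<mu>)"

definition dpolys :: "nat \<Rightarrow> nat \<Rightarrow> 'a::zero dpoly set" where
  "dpolys n m = {f. \<forall>v\<in>dvars f. fst v < n \<and> Poly_Mapping.keys (snd v) \<subseteq> {..<m}}"

text \<open>Points of K^n: functions nat => K vanishing from index n on.\<close>
definition points :: "nat \<Rightarrow> (nat \<Rightarrow> 'a::zero) set" where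
  "points n = {a. \<forall>i\<ge>n. a i = 0}"

definition dvar_val :: "nat \<Rightarrow> (nat \<Rightarrow> 'a \<Rightarrow> 'a) \<Rightarrow> (nat \<Rightarrow> 'a) \<Rightarrow> dvar \<Rightarrow> 'a" where
  "dvar_val m \<delta> a v = theta_app m \<delta> (snd v) (a (fst v))"

definition deval :: "nat \<Rightarrow> (nat \<Rightarrow> 'a::field \<Rightarrow> 'a) \<Rightarrow> 'a dpoly \<Rightarrow> (nat \<Rightarrow> 'a) \<Rightarrow> 'a" where
  "deval m \<delta> f a = (\<Sum>\<mu>\<in>Poly_Mapping.keys f. Poly_Mapping.lookup f \<mu> * (\<Prod>v\<in>Poly_Mapping.keys \<mu>. dvar_val m \<delta> a v ^ Poly_Mapping.lookup \<mu> v))"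

definition dX :: "dvar \<Rightarrow> 'a::{zero,one} dpoly" where
  "dX v = Poly_Mapping.single (Poly_Mapping.single v 1) 1"

definition pdiff :: "dvar \<Rightarrow> 'a::field dpoly \<Rightarrow> 'a dpoly" where
  "pdiff v f = (\<Sum>\<mu>\<in>Poly_Mapping.keys f. Poly_Mapping.single (\<mu> - Poly_Mapping.single v 1)
                                 (Poly_Mapping.lookup f \<mu> * of_nat (Poly_Mapping.lookup \<mu> v)))"

definition coeff_map :: "('a::field \<Rightarrow> 'a) \<Rightarrow> 'a dpoly \<Rightarrow> 'a dpoly" where
  "coeff_map d f = Poly_Mapping.map d f"

definition dvar_shift :: "nat \<Rightarrow> dvar \<Rightarrow> dvar" where
  "dvar_shift j v = (fst v, snd v + Poly_Mapping.single j 1)"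

definition pder :: "(nat \<Rightarrow> 'a::field \<Rightarrow> 'a) \<Rightarrow> nat \<Rightarrow> 'a dpoly \<Rightarrow> 'a dpoly" where
  "pder \<delta> j f = coeff_map (\<delta> j) f + (\<Sum>v\<in>dvars f. pdiff v f * dX (dvar_shift j v))"

inductive_set delta_ideal :: "nat \<Rightarrow> nat \<Rightarrow> (nat \<Rightarrow> 'a::field \<Rightarrow> 'a) \<Rightarrow> 'a dpoly set \<Rightarrow> 'a dpoly set"
  for n m \<delta> S where
  gen: "f \<in> S \<Longrightarrow> f \<in> delta_ideal n m \<delta> S"
| zero: "0 \<in> delta_ideal n m \<delta> S"
| add: "f \<in> delta_ideal n m \<delta> S \<Longrightarrow> g \<in> delta_ideal n m \<delta> S \<Longrightarrow> f + g \<in> delta_ideal n m \<delta> S"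
| mult: "r \<in> dpolys n m \<Longrightarrow> f \<in> delta_ideal n m \<delta> S \<Longrightarrow> r * f \<in> delta_ideal n m \<delta> S"
| der: "j < m \<Longrightarrow> f \<in> delta_ideal n m \<delta> S \<Longrightarrow> pder \<delta> j f \<in> delta_ideal n m \<delta> S"

definition prime_delta_ideal :: "nat \<Rightarrow> nat \<Rightarrow> (nat \<Rightarrow> 'a::field \<Rightarrow> 'a) \<Rightarrow> 'a dpoly set \<Rightarrow> bool" where
  "prime_delta_ideal n m \<delta> P \<longleftrightarrow>
     P \<subseteq> dpolys n m \<and> 0 \<in> P \<and>
     (\<forall>f\<in>P. \<forall>g\<in>P. f + g \<in> P) \<and>
     (\<forall>r\<in>dpolys n m. \<forall>f\<in>P. r * f \<in> P) \<and>
     (\<forall>j<m. \<forall>f\<in>P. pder \<delta> j f \<in> P) \<and>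
     1 \<notin> P \<and>
     (\<forall>f\<in>dpolys n m. \<forall>g\<in>dpolys n m. f * g \<in> P \<longrightarrow> f \<in> P \<or> g \<in> P)"

definition valid_dvar :: "nat \<Rightarrow> nat \<Rightarrow> dvar \<Rightarrow> bool" where
  "valid_dvar n m v \<longleftrightarrow> fst v < n \<and> Poly_Mapping.keys (snd v) \<subseteq> {..<m}"

definition is_ranking :: "nat \<Rightarrow> nat \<Rightarrow> (dvar \<Rightarrow> dvar \<Rightarrow> bool) \<Rightarrow> bool" where
  "is_ranking n m rk \<longleftrightarrow>
     (\<forall>u. \<not> rk u u) \<and>
     (\<forall>u v w. rk u v \<longrightarrow> rk v w \<longrightarrow> rk u w) \<and>
     (\<forall>u v. valid_dvar n m u \<longrightarrow> valid_dvar n m v \<longrightarrow> u = v \<or> rk u v \<or> rk v u) \<and>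
     (\<forall>u j. valid_dvar n m u \<longrightarrow> j < m \<longrightarrow> rk u (dvar_shift j u)) \<and>
     (\<forall>u v j. valid_dvar n m u \<longrightarrow> valid_dvar n m v \<longrightarrow> j < m \<longrightarrow> rk u v \<longrightarrow>
              rk (dvar_shift j u) (dvar_shift j v))"

definition leader :: "(dvar \<Rightarrow> dvar \<Rightarrow> bool) \<Rightarrow> 'a::zero dpoly \<Rightarrow> dvar" where
  "leader rk f = (THE v. v \<in> dvars f \<and> (\<forall>w\<in>dvars f. w \<noteq> v \<longrightarrow> rk w v))"

definition degree_in :: "dvar \<Rightarrow> 'a::zero dpoly \<Rightarrow> nat" where
  "degree_in v f = (if f = 0 then 0 else Max ((\<lambda>\<mu>. Poly_Mapping.lookup \<mu> v) ` Poly_Mapping.keys f))"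

definition coeff_in :: "dvar \<Rightarrow> nat \<Rightarrow> 'a::field dpoly \<Rightarrow> 'a dpoly" where
  "coeff_in v k f = (\<Sum>\<mu>\<in>{\<mu>\<in>Poly_Mapping.keys f. Poly_Mapping.lookup \<mu> v = k}.
                       Poly_Mapping.single (\<mu> - Poly_Mapping.single v k) (Poly_Mapping.lookup f \<mu>))"

definition initial :: "(dvar \<Rightarrow> dvar \<Rightarrow> bool) \<Rightarrow> 'a::field dpoly \<Rightarrow> 'a dpoly" where
  "initial rk f = coeff_in (leader rk f) (degree_in (leader rk f) f) f"

definition separant :: "(dvar \<Rightarrow> dvar \<Rightarrow> bool) \<Rightarrow> 'a::field dpoly \<Rightarrow> 'a dpoly" where
  "separant rk f = pdiff (leader rk f) f"

definition is_const :: "'a::zero dpoly \<Rightarrow> bool" where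
  "is_const f \<longleftrightarrow> dvars f = {}"

definition proper_derivative :: "dvar \<Rightarrow> dvar \<Rightarrow> bool" where
  "proper_derivative w u \<longleftrightarrow> fst w = fst u \<and> (\<forall>j. Poly_Mapping.lookup (snd u) j \<le> Poly_Mapping.lookup (snd w) j) \<and> snd w \<noteq> snd u"

definition partially_reduced :: "(dvar \<Rightarrow> dvar \<Rightarrow> bool) \<Rightarrow> 'a::zero dpoly \<Rightarrow> 'a dpoly \<Rightarrow> bool" where
  "partially_reduced rk f g \<longleftrightarrow> (\<forall>w\<in>dvars f. \<not> proper_derivative w (leader rk g))"

definition reduced :: "(dvar \<Rightarrow> dvar \<Rightarrow> bool) \<Rightarrow> 'a::zero dpoly \<Rightarrow> 'a dpoly \<Rightarrow> bool" where
  "reduced rk f g \<longleftrightarrow> partially_reduced rk f g \<and>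
      degree_in (leader rk g) f < degree_in (leader rk g) g"

definition autoreduced :: "(dvar \<Rightarrow> dvar \<Rightarrow> bool) \<Rightarrow> 'a::zero dpoly set \<Rightarrow> bool" where
  "autoreduced rk A \<longleftrightarrow> finite A \<and> (\<forall>f\<in>A. \<not> is_const f) \<and>
      (\<forall>f\<in>A. \<forall>g\<in>A. f \<noteq> g \<longrightarrow> reduced rk f g)"

definition rank_less :: "(dvar \<Rightarrow> dvar \<Rightarrow> bool) \<Rightarrow> 'a::zero dpoly \<Rightarrow> 'a dpoly \<Rightarrow> bool" where
  "rank_less rk f g \<longleftrightarrow> rk (leader rk f) (leader rk g) \<or>
     (leader rk f = leader rk g \<and> degree_in (leader rk f) f < degree_in (leader rk g) g)"

definition same_rank :: "(dvar \<Rightarrow> dvar \<Rightarrow> bool) \<Rightarrow> 'a::zero dpoly \<Rightarrow> 'a dpoly \<Rightarrow> bool" where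
  "same_rank rk f g \<longleftrightarrow> leader rk f = leader rk g \<and>
     degree_in (leader rk f) f = degree_in (leader rk g) g"

definition aut_lower :: "(dvar \<Rightarrow> dvar \<Rightarrow> bool) \<Rightarrow> 'a::zero dpoly set \<Rightarrow> 'a dpoly set \<Rightarrow> bool" where
  "aut_lower rk A B \<longleftrightarrow>
     (\<exists>as bs. set as = A \<and> set bs = B \<and> sorted_wrt (rank_less rk) as \<and> sorted_wrt (rank_less rk) bs \<and>
        ((\<exists>k<min (length as) (length bs). (\<forall>i<k. same_rank rk (as ! i) (bs ! i)) \<and>
              rank_less rk (as ! k) (bs ! k)) \<or>
         (length as > length bs \<and> (\<forall>i<length bs. same_rank rk (as ! i) (bs ! i)))))"

definition characteristic_set :: "(dvar \<Rightarrow> dvar \<Rightarrow> bool) \<Rightarrow> 'a::zero dpoly set \<Rightarrow> 'a dpoly set \<Rightarrow> bool" where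
  "characteristic_set rk \<Lambda> P \<longleftrightarrow> autoreduced rk \<Lambda> \<and> \<Lambda> \<subseteq> P \<and>
     \<not> (\<exists>B. autoreduced rk B \<and> B \<subseteq> P \<and> aut_lower rk B \<Lambda>)"

definition H_of :: "(dvar \<Rightarrow> dvar \<Rightarrow> bool) \<Rightarrow> 'a::field dpoly set \<Rightarrow> 'a dpoly" where
  "H_of rk \<Lambda> = (\<Prod>f\<in>\<Lambda>. initial rk f * separant rk f)"

definition saturation :: "nat \<Rightarrow> nat \<Rightarrow> (nat \<Rightarrow> 'a::field \<Rightarrow> 'a) \<Rightarrow> 'a dpoly set \<Rightarrow> 'a dpoly \<Rightarrow> 'a dpoly set" where
  "saturation n m \<delta> \<Lambda> H = {f \<in> dpolys n m. \<exists>l. H ^ l * f \<in> delta_ideal n m \<delta> \<Lambda>}"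

definition zero_set :: "nat \<Rightarrow> nat \<Rightarrow> (nat \<Rightarrow> 'a::field \<Rightarrow> 'a) \<Rightarrow> 'a dpoly set \<Rightarrow> (nat \<Rightarrow> 'a) set" where
  "zero_set n m \<delta> S = {a \<in> points n. \<forall>f\<in>S. deval m \<delta> f a = 0}"

definition vanishing_ideal :: "nat \<Rightarrow> nat \<Rightarrow> (nat \<Rightarrow> 'a::field \<Rightarrow> 'a) \<Rightarrow> (nat \<Rightarrow> 'a) set \<Rightarrow> 'a dpoly set" where
  "vanishing_ideal n m \<delta> V = {f \<in> dpolys n m. \<forall>a\<in>V. deval m \<delta> f a = 0}"

definition tau_eval :: "nat \<Rightarrow> (nat \<Rightarrow> 'a::field \<Rightarrow> 'a) \<Rightarrow> ('a \<Rightarrow> 'a) \<Rightarrow> 'a dpoly \<Rightarrow> (nat \<Rightarrow> 'a) \<Rightarrow> (nat \<Rightarrow> 'a) \<Rightarrow> 'a" where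
  "tau_eval m \<delta> D f a b = deval m \<delta> (coeff_map D f) a +
      (\<Sum>v\<in>dvars f. deval m \<delta> (pdiff v f) a * dvar_val m \<delta> b v)"

definition tau_zero_set :: "nat \<Rightarrow> nat \<Rightarrow> (nat \<Rightarrow> 'a::field \<Rightarrow> 'a) \<Rightarrow> ('a \<Rightarrow> 'a) \<Rightarrow> 'a dpoly set \<Rightarrow> ((nat \<Rightarrow> 'a) \<times> (nat \<Rightarrow> 'a)) set" where
  "tau_zero_set n m \<delta> D S = {(a, b). a \<in> points n \<and> b \<in> points n \<and>
      (\<forall>f\<in>S. deval m \<delta> f a = 0 \<and> tau_eval m \<delta> D f a b = 0)}"

definition prolongation :: "nat \<Rightarrow> nat \<Rightarrow> (nat \<Rightarrow> 'a::field \<Rightarrow> 'a) \<Rightarrow> ('a \<Rightarrow> 'a) \<Rightarrow> (nat \<Rightarrow> 'a) set \<Rightarrow> ((nat \<Rightarrow> 'a) \<times> (nat \<Rightarrow> 'a)) set" where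
  "prolongation n m \<delta> D V = tau_zero_set n m \<delta> D (vanishing_ideal n m \<delta> V)"

text \<open>(K, Delta) is differentially closed, expressed via the differential Nullstellensatz
  form of existential closedness: every system f = 0 (f \<in> F), g \<noteq> 0 over K that is consistent
  (no power of g lies in [F]) has a solution in K.\<close>
definition DCF :: "nat \<Rightarrow> (nat \<Rightarrow> 'a::field_char_0 \<Rightarrow> 'a) \<Rightarrow> bool" where
  "DCF m \<delta> \<longleftrightarrow> (\<forall>j<m. is_derivation (\<delta> j)) \<and> (\<forall>j<m. \<forall>k<m. \<delta> j \<circ> \<delta> k = \<delta> k \<circ> \<delta> j) \<and>
     (\<forall>N F g. finite F \<longrightarrow> F \<subseteq> dpolys N m \<longrightarrow> g \<in> dpolys N m \<longrightarrow>
        (\<forall>k. g ^ k \<notin> delta_ideal N m \<delta> F) \<longrightarrow>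
        (\<exists>a\<in>points N. (\<forall>f\<in>F. deval m \<delta> f a = 0) \<and> deval m \<delta> g a \<noteq> 0))"

end

theory Submission
  imports Defs "HOL-Library.Ramsey"
begin


abbreviation lk where "lk \<equiv> Poly_Mapping.lookup"
abbreviation ks where "ks \<equiv> Poly_Mapping.keys"
abbreviation sg where "sg \<equiv> Poly_Mapping.single"

lemma pm_expand: "p = (\<Sum>\<mu>\<in>ks p. sg \<mu> (lk p \<mu>))"
proof (rule poly_mapping_eqI)
  fix k
  have "lk (\<Sum>\<mu>\<in>ks p. sg \<mu> (lk p \<mu>)) k = (\<Sum>\<mu>\<in>ks p. (lk p \<mu> when \<mu> = k))"
    by (simp add: lookup_sum lookup_single)
  also have "\<dots> = lk p k"
    by (cases "k \<in> ks p") (auto simp: when_def in_keys_iff)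
  finally show "lk p k = lk (\<Sum>\<mu>\<in>ks p. sg \<mu> (lk p \<mu>)) k" by simp
qed

lemma pm_induct[case_names zero single add]:
  fixes p :: "'a \<Rightarrow>\<^sub>0 'b::comm_monoid_add"
  assumes "P 0" "\<And>\<mu> c. P (sg \<mu> c)" "\<And>p q. P p \<Longrightarrow> P q \<Longrightarrow> P (p + q)"
  shows "P p"
proof -
  have "\<And>S. finite S \<Longrightarrow> P (\<Sum>\<mu>\<in>S. sg \<mu> (lk p \<mu>))"
  proof -
    fix S :: "'a set" assume "finite S"
    then show "P (\<Sum>\<mu>\<in>S. sg \<mu> (lk p \<mu>))"
      by (induction S rule: finite_induct) (auto intro: assms)
  qed
  then show ?thesis by (subst pm_expand) simp
qed

lemma sum_keys_super:
  assumes "finite S" "ks p \<subseteq> S" "\<And>\<mu>. F \<mu> 0 = 0"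
  shows "(\<Sum>\<mu>\<in>ks p. F \<mu> (lk p \<mu>)) = (\<Sum>\<mu>\<in>S. F \<mu> (lk p \<mu>))"
  by (rule sum.mono_neutral_left) (use assms in \<open>auto simp: in_keys_iff\<close>)

lemma keys_add_nat: "ks (a + b :: 'a \<Rightarrow>\<^sub>0 nat) = ks a \<union> ks b"
  by (auto simp: in_keys_iff lookup_add)

lemma lookup_minus_nat: "lk (a - b :: 'a \<Rightarrow>\<^sub>0 nat) k = lk a k - lk b k"
  by (simp add: lookup_minus)

lemma lookup_plus_nat: "lk (a + b :: 'a \<Rightarrow>\<^sub>0 nat) k = lk a k + lk b k"
  by (simp add: lookup_add)


definition mon :: "nat \<Rightarrow> (nat \<Rightarrow> 'a::field \<Rightarrow> 'a) \<Rightarrow> (nat \<Rightarrow> 'a) \<Rightarrow> (dvar \<Rightarrow>\<^sub>0 nat) \<Rightarrow> 'a" where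
  "mon m \<delta> a \<mu> = (\<Prod>v\<in>ks \<mu>. dvar_val m \<delta> a v ^ lk \<mu> v)"

lemma mon_super:
  assumes "finite S" "ks \<mu> \<subseteq> S"
  shows "mon m \<delta> a \<mu> = (\<Prod>v\<in>S. dvar_val m \<delta> a v ^ lk \<mu> v)"
  unfolding mon_def by (rule prod.mono_neutral_left) (use assms in \<open>auto simp: in_keys_iff\<close>)

lemma mon_add: "mon m \<delta> a (\<mu> + \<nu>) = mon m \<delta> a \<mu> * mon m \<delta> a \<nu>"
proof -
  let ?S = "ks \<mu> \<union> ks \<nu>"
  have "mon m \<delta> a (\<mu> + \<nu>) = (\<Prod>v\<in>?S. dvar_val m \<delta> a v ^ lk (\<mu>+\<nu>) v)"
    by (rule mon_super) (auto simp: keys_add_nat)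
  also have "\<dots> = (\<Prod>v\<in>?S. dvar_val m \<delta> a v ^ lk \<mu> v * dvar_val m \<delta> a v ^ lk \<nu> v)"
    by (simp add: lookup_add power_add)
  also have "\<dots> = mon m \<delta> a \<mu> * mon m \<delta> a \<nu>"
    by (simp add: prod.distrib mon_super[of ?S])
  finally show ?thesis .
qed

lemma mon_zero[simp]: "mon m \<delta> a 0 = 1" by (simp add: mon_def)

lemma deval_mon: "deval m \<delta> f a = (\<Sum>\<mu>\<in>ks f. lk f \<mu> * mon m \<delta> a \<mu>)"
  by (simp add: deval_def mon_def)

lemma deval_super:
  assumes "finite S" "ks f \<subseteq> S"
  shows "deval m \<delta> f a = (\<Sum>\<mu>\<in>S. lk f \<mu> * mon m \<delta> a \<mu>)"
  unfolding deval_mon by (rule sum_keys_super[where F="\<lambda>\<mu> c. c * mon m \<delta> a \<mu>"]) (use assms in auto)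

lemma deval_add: "deval m \<delta> (f + g) a = deval m \<delta> f a + deval m \<delta> g a"
proof -
  let ?S = "ks f \<union> ks g \<union> ks (f+g)"
  have "deval m \<delta> f a = (\<Sum>\<mu>\<in>?S. lk f \<mu> * mon m \<delta> a \<mu>)" by (rule deval_super) auto
  moreover have "deval m \<delta> g a = (\<Sum>\<mu>\<in>?S. lk g \<mu> * mon m \<delta> a \<mu>)" by (rule deval_super) auto
  moreover have "deval m \<delta> (f+g) a = (\<Sum>\<mu>\<in>?S. lk (f+g) \<mu> * mon m \<delta> a \<mu>)" by (rule deval_super) auto
  ultimately show ?thesis
    by (simp add: lookup_add distrib_right sum.distrib)
qed

lemma deval_zero[simp]: "deval m \<delta> 0 a = 0" by (simp add: deval_def)

lemma deval_single: "deval m \<delta> (sg \<mu> c) a = c * mon m \<delta> a \<mu>"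
  by (subst deval_super[of "{\<mu>}"]) auto

lemma deval_uminus: "deval m \<delta> (- f) a = - deval m \<delta> f a"
  by (simp add: deval_mon sum_negf)

lemma deval_diff: "deval m \<delta> (f - g) a = deval m \<delta> f a - deval m \<delta> g a"
  using deval_add[of m \<delta> f "-g" a] by (simp add: deval_uminus)

lemma deval_mult: "deval m \<delta> (f * g) a = deval m \<delta> f a * deval m \<delta> g a"
proof (induction f rule: pm_induct)
  case zero then show ?case by simp
next
  case (add p q) then show ?case by (simp add: distrib_right deval_add)
next
  case (single \<mu> c)
  show ?case
  proof (induction g rule: pm_induct)
    case zero then show ?case by simp
  next
    case (add p q) then show ?case by (simp add: distrib_left deval_add)
  next
    case (single \<nu> d)
    show ?case by (simp add: mult_single deval_single mon_add)
  qed
qed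

lemma deval_one[simp]: "deval m \<delta> 1 a = 1"
  by (metis deval_single mon_zero mult_1 single_one)

lemma deval_power: "deval m \<delta> (f ^ k) a = deval m \<delta> f a ^ k"
  by (induction k) (simp_all add: deval_mult)

lemma deval_const: "deval m \<delta> (sg 0 c) a = c"
  by (simp add: deval_single)

lemma deval_dX: "deval m \<delta> (dX v) a = dvar_val m \<delta> a v"
  by (simp add: dX_def deval_single mon_def)

lemma deval_prod: "finite S \<Longrightarrow> deval m \<delta> (\<Prod>i\<in>S. F i) a = (\<Prod>i\<in>S. deval m \<delta> (F i) a)"
  by (induction S rule: finite_induct) (simp_all add: deval_mult)

lemma deval_sum: "deval m \<delta> (\<Sum>i\<in>S. F i) a = (\<Sum>i\<in>S. deval m \<delta> (F i) a)"
  by (induction S rule: infinite_finite_induct) (simp_all add: deval_add)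

lemma dvars_single: "dvars (sg \<mu> c) = (if c = 0 then {} else ks \<mu>)"
  by (simp add: dvars_def)

lemma dvars_zero[simp]: "dvars 0 = {}" by (simp add: dvars_def)

lemma dvars_add: "dvars (f + g) \<subseteq> dvars f \<union> dvars g"
  unfolding dvars_def using keys_add by fastforce

lemma dvars_uminus[simp]: "dvars (- f) = dvars (f::'a::ab_group_add dpoly)"
  by (simp add: dvars_def keys_minus)

lemma dvars_diff: "dvars (f - g :: 'a::ab_group_add dpoly) \<subseteq> dvars f \<union> dvars g"
  using dvars_add[of f "-g"] by simp

lemma dvars_mult: "dvars (f * g) \<subseteq> dvars f \<union> dvars g"
proof
  fix v assume "v \<in> dvars (f * g)"
  then obtain \<mu> where "\<mu> \<in> ks (f*g)" "v \<in> ks \<mu>" by (auto simp: dvars_def)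
  then obtain a b where "a \<in> ks f" "b \<in> ks g" "\<mu> = a + b" using keys_mult by blast
  then show "v \<in> dvars f \<union> dvars g" using \<open>v \<in> ks \<mu>\<close> by (auto simp: dvars_def keys_add_nat)
qed

lemma dvars_sum: "dvars (\<Sum>i\<in>S. F i) \<subseteq> (\<Union>i\<in>S. dvars (F i))"
  by (induction S rule: infinite_finite_induct) (use dvars_add in auto)

lemma dvars_one[simp]: "dvars 1 = {}"
  by (metis dvars_single keys_zero single_one)

lemma dvars_prod: "dvars (\<Prod>i\<in>S. F i) \<subseteq> (\<Union>i\<in>S. dvars (F i))"
  by (induction S rule: infinite_finite_induct) (use dvars_mult in auto)

lemma dvars_power: "dvars (f ^ k) \<subseteq> dvars f"
  by (induction k) (use dvars_mult in auto)

lemma dvars_dX[simp]: "dvars (dX v :: 'a::{zero_neq_one} dpoly) = {v}"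
  by (simp add: dX_def dvars_single)

lemma dvars_const[simp]: "dvars (sg 0 c) = {}"
  by (simp add: dvars_single)

lemma finite_dvars[simp]: "finite (dvars f)"
  by (simp add: dvars_def)

lemma dvars_empty_const: "dvars f = {} \<Longrightarrow> f = sg 0 (lk f 0)"
proof -
  assume "dvars f = {}"
  then have "ks f \<subseteq> {0}" by (auto simp: dvars_def)
  then show ?thesis
    by (intro poly_mapping_eqI) (auto simp: lookup_single when_def in_keys_iff)
qed

lemma dpolys_iff: "f \<in> dpolys n m \<longleftrightarrow> (\<forall>v\<in>dvars f. valid_dvar n m v)"
  by (simp add: dpolys_def valid_dvar_def)

lemma dpolys_sub: "dvars f \<subseteq> dvars g \<Longrightarrow> g \<in> dpolys n m \<Longrightarrow> f \<in> dpolys n m"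
  by (auto simp: dpolys_iff)

lemma dpolys_add: "f \<in> dpolys n m \<Longrightarrow> g \<in> dpolys n m \<Longrightarrow> f + g \<in> dpolys n m"
  using dvars_add by (fastforce simp: dpolys_iff)
lemma dpolys_diff: "(f::'a::ab_group_add dpoly) \<in> dpolys n m \<Longrightarrow> g \<in> dpolys n m \<Longrightarrow> f - g \<in> dpolys n m"
  using dvars_diff by (fastforce simp: dpolys_iff)
lemma dpolys_uminus: "(f::'a::ab_group_add dpoly) \<in> dpolys n m \<Longrightarrow> - f \<in> dpolys n m"
  by (simp add: dpolys_iff)
lemma dpolys_mult: "f \<in> dpolys n m \<Longrightarrow> g \<in> dpolys n m \<Longrightarrow> f * g \<in> dpolys n m"
  using dvars_mult by (fastforce simp: dpolys_iff)
lemma dpolys_power: "f \<in> dpolys n m \<Longrightarrow> f ^ k \<in> dpolys n m"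
  using dvars_power by (fastforce simp: dpolys_iff)
lemma dpolys_const: "sg 0 c \<in> dpolys n m"
  by (simp add: dpolys_iff)
lemma dpolys_one: "1 \<in> dpolys n m"
  by (simp add: dpolys_iff)
lemma dpolys_zero: "0 \<in> dpolys n m"
  by (simp add: dpolys_iff)
lemma dpolys_prod: "(\<And>i. i \<in> S \<Longrightarrow> F i \<in> dpolys n m) \<Longrightarrow> (\<Prod>i\<in>S. F i) \<in> dpolys n m"
  using dvars_prod[of F S] by (fastforce simp: dpolys_iff)
lemma dpolys_dX: "valid_dvar n m v \<Longrightarrow> (dX v :: 'a::zero_neq_one dpoly) \<in> dpolys n m"
  by (simp add: dpolys_iff)


lemma dX_power: "(dX v :: 'a::comm_semiring_1 dpoly) ^ k = sg (sg v k) 1"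
  by (induction k) (simp_all add: dX_def mult_single single_add[symmetric] add.commute)

lemma prod_dX_power: "(\<Prod>v\<in>S. (dX v :: 'a::comm_semiring_1 dpoly) ^ F v) = sg (\<Sum>v\<in>S. sg v (F v)) 1"
  by (induction S rule: infinite_finite_induct) (simp_all add: dX_power mult_single)

lemma single_decomp: "(sg \<mu> c :: 'a::comm_semiring_1 dpoly) = sg 0 c * (\<Prod>v\<in>ks \<mu>. dX v ^ lk \<mu> v)"
  by (simp add: prod_dX_power mult_single pm_expand[of \<mu>, symmetric])

lemma gen_induct[case_names const var add mult]:
  fixes f :: "'a::comm_semiring_1 dpoly"
  assumes c: "\<And>c. P (sg 0 c)" and v: "\<And>v. P (dX v)"
    and a: "\<And>p q. P p \<Longrightarrow> P q \<Longrightarrow> P (p + q)" and m: "\<And>p q. P p \<Longrightarrow> P q \<Longrightarrow> P (p * q)"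
  shows "P f"
proof (induction f rule: pm_induct)
  case zero then show ?case using c[of 0] by simp
next
  case (add p q) then show ?case using a by blast
next
  case (single \<mu> c)
  have pw: "P (x ^ k)" if "P x" for x :: "'a dpoly" and k
    using that by (induction k) (use c[of 1] m in auto)
  have "P (\<Prod>v\<in>S. dX v ^ lk \<mu> v)" for S
    by (induction S rule: infinite_finite_induct) (use c[of 1] m pw v in auto)
  then show ?case by (subst single_decomp) (use m c in blast)
qed

lemma der_add: "is_derivation d \<Longrightarrow> d (x + y) = d x + d y" by (simp add: is_derivation_def)
lemma der_mult: "is_derivation d \<Longrightarrow> d (x * y) = d x * y + x * d y" by (simp add: is_derivation_def)
lemma der_zero: "is_derivation d \<Longrightarrow> d 0 = 0"
  using der_mult[of d 0 0] by simp
lemma der_one: "is_derivation d \<Longrightarrow> d 1 = 0"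
  using der_mult[of d 1 1] by (metis add_cancel_right_right mult_1_left mult_1_right)
lemma der_uminus: "is_derivation d \<Longrightarrow> d (- x) = - d x"
  using der_add[of d x "-x"] der_zero[of d] by (simp add: eq_neg_iff_add_eq_0 add.commute)
lemma der_diff: "is_derivation d \<Longrightarrow> d (x - y) = d x - d y"
  using der_add[of d x "-y"] der_uminus[of d y] by simp
lemma der_sum: "is_derivation d \<Longrightarrow> d (\<Sum>i\<in>S. F i) = (\<Sum>i\<in>S. d (F i))"
  by (induction S rule: infinite_finite_induct) (simp_all add: der_zero der_add)
lemma der_power: "is_derivation d \<Longrightarrow> d (x ^ k) = of_nat k * x ^ (k - 1) * d x"
proof (induction k)
  case 0 then show ?case by (simp add: der_one)
next
  case (Suc k)
  then show ?case by (cases k) (auto simp: der_mult algebra_simps)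
qed

lemma lookup_cmap: "d 0 = 0 \<Longrightarrow> lk (coeff_map d f) k = d (lk f k)"
  by (simp add: coeff_map_def Poly_Mapping.map.rep_eq when_def)

lemma cmap_add: "is_derivation d \<Longrightarrow> coeff_map d (f + g) = coeff_map d f + coeff_map d g"
  by (rule poly_mapping_eqI) (simp add: lookup_cmap der_zero lookup_add der_add)

lemma cmap_zero[simp]: "d 0 = 0 \<Longrightarrow> coeff_map d 0 = 0"
  by (rule poly_mapping_eqI) (simp add: lookup_cmap)

lemma cmap_single: "d 0 = 0 \<Longrightarrow> coeff_map d (sg \<mu> c) = sg \<mu> (d c)"
  by (simp add: coeff_map_def)

lemma keys_cmap: "ks (coeff_map d f) \<subseteq> ks f"
  by (auto simp: coeff_map_def Poly_Mapping.map.rep_eq in_keys_iff when_def split: if_splits)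

lemma dvars_cmap: "dvars (coeff_map d f) \<subseteq> dvars f"
  unfolding dvars_def using keys_cmap by blast

lemma cmap_mult:
  assumes "is_derivation d"
  shows "coeff_map d (f * g) = coeff_map d f * g + f * coeff_map d g"
proof (induction f rule: pm_induct)
  case zero then show ?case using assms by (simp add: der_zero)
next
  case (add p q) then show ?case using assms by (simp add: cmap_add distrib_right)
next
  case (single \<mu> c)
  show ?case
  proof (induction g rule: pm_induct)
    case zero then show ?case using assms by (simp add: der_zero)
  next
    case (add p q) then show ?case using assms by (simp add: cmap_add distrib_left)
  next
    case (single \<nu> e)
    show ?case using assms
      by (simp add: mult_single cmap_single der_zero der_mult single_add)
  qed
qed

lemma pdiff_super:
  assumes "finite S" "ks f \<subseteq> S"
  shows "pdiff v f = (\<Sum>\<mu>\<in>S. sg (\<mu> - sg v 1) (lk f \<mu> * of_nat (lk \<mu> v)))"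
  unfolding pdiff_def by (rule sum_keys_super[where F="\<lambda>\<mu> c. sg (\<mu> - sg v 1) (c * of_nat (lk \<mu> v))"]) (use assms in auto)

lemma pdiff_add: "pdiff v (f + g) = pdiff v f + pdiff v g"
proof -
  let ?S = "ks f \<union> ks g \<union> ks (f+g)"
  have "pdiff v f = (\<Sum>\<mu>\<in>?S. sg (\<mu> - sg v 1) (lk f \<mu> * of_nat (lk \<mu> v)))" by (rule pdiff_super) auto
  moreover have "pdiff v g = (\<Sum>\<mu>\<in>?S. sg (\<mu> - sg v 1) (lk g \<mu> * of_nat (lk \<mu> v)))" by (rule pdiff_super) auto
  moreover have "pdiff v (f+g) = (\<Sum>\<mu>\<in>?S. sg (\<mu> - sg v 1) (lk (f+g) \<mu> * of_nat (lk \<mu> v)))" by (rule pdiff_super) auto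
  ultimately show ?thesis
    by (simp add: lookup_add distrib_right sum.distrib single_add)
qed

lemma pdiff_zero[simp]: "pdiff v 0 = 0" by (simp add: pdiff_def)

lemma pdiff_single: "pdiff v (sg \<mu> c) = sg (\<mu> - sg v 1) (c * of_nat (lk \<mu> v))"
  by (subst pdiff_super[of "{\<mu>}"]) auto

lemma pdiff_notin: "v \<notin> dvars f \<Longrightarrow> pdiff v f = 0"
  unfolding pdiff_def dvars_def by (intro sum.neutral) (auto simp: in_keys_iff)

lemma dvars_pdiff: "dvars (pdiff v f) \<subseteq> dvars f"
proof -
  have "dvars (pdiff v f) \<subseteq> (\<Union>\<mu>\<in>ks f. dvars (sg (\<mu> - sg v 1) (lk f \<mu> * of_nat (lk \<mu> v))))"
    unfolding pdiff_def by (rule dvars_sum)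
  also have "\<dots> \<subseteq> dvars f"
    by (auto simp: dvars_single dvars_def in_keys_iff lookup_minus_nat split: if_splits)
  finally show ?thesis .
qed

lemma minus_single_plus:
  "lk \<mu> v \<noteq> 0 \<Longrightarrow> \<mu> - sg v 1 + \<nu> = \<mu> + \<nu> - sg v (1::nat)"
  by (rule poly_mapping_eqI) (auto simp: lookup_minus_nat lookup_plus_nat lookup_single when_def)

lemma pdiff_mult: "pdiff v (f * g) = pdiff v f * g + f * (pdiff v g :: 'a::field dpoly)"
proof (induction f rule: pm_induct)
  case zero then show ?case by simp
next
  case (add p q) then show ?case by (simp add: pdiff_add distrib_right)
next
  case (single \<mu> c)
  show ?case
  proof (induction g rule: pm_induct)
    case zero then show ?case by simp
  next
    case (add p q) then show ?case by (simp add: pdiff_add distrib_left)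
  next
    case (single \<nu> e)
    have 1: "sg (\<mu> - sg v 1 + \<nu>) (c * of_nat (lk \<mu> v) * e) = sg (\<mu> + \<nu> - sg v 1) (c * e * of_nat (lk \<mu> v))"
    proof (cases "lk \<mu> v = 0")
      case False
      then have "\<mu> - sg v 1 + \<nu> = \<mu> + \<nu> - sg v 1" by (rule minus_single_plus)
      then show ?thesis by (simp add: mult_ac)
    qed simp
    have 2: "sg (\<mu> + (\<nu> - sg v 1)) (c * (e * of_nat (lk \<nu> v))) = sg (\<mu> + \<nu> - sg v 1) (c * e * of_nat (lk \<nu> v))"
    proof (cases "lk \<nu> v = 0")
      case False
      then have "\<nu> - sg v 1 + \<mu> = \<nu> + \<mu> - sg v 1" by (rule minus_single_plus)
      then show ?thesis by (simp add: mult_ac add.commute)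
    qed simp
    have 3: "pdiff v (sg \<mu> c * sg \<nu> e) = sg (\<mu>+\<nu> - sg v 1) (c*e*of_nat(lk (\<mu>+\<nu>) v))"
      by (simp only: mult_single pdiff_single)
    have 4: "pdiff v (sg \<mu> c) * sg \<nu> e + sg \<mu> c * pdiff v (sg \<nu> e) =
       sg (\<mu> - sg v 1 + \<nu>) (c * of_nat (lk \<mu> v) * e) + sg (\<mu> + (\<nu> - sg v 1)) (c * (e * of_nat (lk \<nu> v)))"
      by (simp only: pdiff_single mult_single)
    show ?case
      unfolding 3 4 1 2 by (simp add: single_add[symmetric] lookup_plus_nat distrib_left)
  qed
qed

lemma pdiff_dX: "pdiff v (dX w) = (if v = w then 1 else 0)"
  by (auto simp: dX_def pdiff_single lookup_single)

lemma pdiff_const[simp]: "pdiff v (sg 0 c) = 0"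
  by (simp add: pdiff_single)

lemma pdiff_uminus: "pdiff v (- f) = - pdiff v (f :: 'a::field dpoly)"
  using pdiff_add[of v f "-f"] by (simp add: eq_neg_iff_add_eq_0 add.commute)

lemma pdiff_diff: "pdiff v (f - g) = pdiff v f - pdiff v (g :: 'a::field dpoly)"
  using pdiff_add[of v f "-g"] pdiff_uminus[of v g] by simp


lemma pder_super:
  assumes "finite S" "dvars f \<subseteq> S"
  shows "pder \<delta> j f = coeff_map (\<delta> j) f + (\<Sum>v\<in>S. pdiff v f * dX (dvar_shift j v))"
proof -
  have "(\<Sum>v\<in>dvars f. pdiff v f * dX (dvar_shift j v)) = (\<Sum>v\<in>S. pdiff v f * dX (dvar_shift j v))"
    by (rule sum.mono_neutral_left) (use assms in \<open>auto simp: pdiff_notin\<close>)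
  then show ?thesis by (simp add: pder_def)
qed

lemma pder_add:
  assumes "is_derivation (\<delta> j)"
  shows "pder \<delta> j (f + g) = pder \<delta> j f + pder \<delta> j g"
proof -
  let ?S = "dvars f \<union> dvars g"
  have "pder \<delta> j (f+g) = coeff_map (\<delta> j) (f+g) + (\<Sum>v\<in>?S. pdiff v (f+g) * dX (dvar_shift j v))"
    by (rule pder_super) (use dvars_add in auto)
  moreover have "pder \<delta> j f = coeff_map (\<delta> j) f + (\<Sum>v\<in>?S. pdiff v f * dX (dvar_shift j v))"
    by (rule pder_super) auto
  moreover have "pder \<delta> j g = coeff_map (\<delta> j) g + (\<Sum>v\<in>?S. pdiff v g * dX (dvar_shift j v))"
    by (rule pder_super) auto
  ultimately show ?thesis using assms
    by (simp add: cmap_add pdiff_add distrib_right sum.distrib)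
qed

lemma pder_mult:
  assumes "is_derivation (\<delta> j)"
  shows "pder \<delta> j (f * g) = pder \<delta> j f * g + f * pder \<delta> j g"
proof -
  let ?S = "dvars f \<union> dvars g"
  have "pder \<delta> j (f*g) = coeff_map (\<delta> j) (f*g) + (\<Sum>v\<in>?S. pdiff v (f*g) * dX (dvar_shift j v))"
    by (rule pder_super) (use dvars_mult in auto)
  moreover have "pder \<delta> j f = coeff_map (\<delta> j) f + (\<Sum>v\<in>?S. pdiff v f * dX (dvar_shift j v))"
    by (rule pder_super) auto
  moreover have "pder \<delta> j g = coeff_map (\<delta> j) g + (\<Sum>v\<in>?S. pdiff v g * dX (dvar_shift j v))"
    by (rule pder_super) auto
  ultimately show ?thesis using assms
    by (simp add: cmap_mult pdiff_mult distrib_right distrib_left sum.distrib sum_distrib_left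
        sum_distrib_right algebra_simps)
qed

lemma pder_const:
  assumes "is_derivation (\<delta> j)"
  shows "pder \<delta> j (sg 0 c) = sg 0 (\<delta> j c)"
  using assms by (simp add: pder_def cmap_single der_zero)

lemma pder_dX:
  assumes "is_derivation (\<delta> j)"
  shows "pder \<delta> j (dX v) = dX (dvar_shift j v)"
  using assms by (simp add: pder_def dX_def cmap_single der_zero der_one dvars_single pdiff_single)

lemma pder_zero[simp]: "is_derivation (\<delta> j) \<Longrightarrow> pder \<delta> j 0 = 0"
  by (simp add: pder_def der_zero)

lemma pder_uminus: "is_derivation (\<delta> j) \<Longrightarrow> pder \<delta> j (- f) = - pder \<delta> j f"
  using pder_add[of \<delta> j f "-f"] by (simp add: eq_neg_iff_add_eq_0 add.commute)

lemma pder_diff: "is_derivation (\<delta> j) \<Longrightarrow> pder \<delta> j (f - g) = pder \<delta> j f - pder \<delta> j g"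
  using pder_add[of \<delta> j f "-g"] pder_uminus[of \<delta> j g] by simp

lemma dvars_pder: "dvars (pder \<delta> j f) \<subseteq> dvars f \<union> dvar_shift j ` dvars f"
proof -
  have "dvars (pder \<delta> j f) \<subseteq> dvars (coeff_map (\<delta> j) f) \<union> dvars (\<Sum>v\<in>dvars f. pdiff v f * dX (dvar_shift j v))"
    unfolding pder_def by (rule dvars_add)
  also have "\<dots> \<subseteq> dvars f \<union> dvar_shift j ` dvars f"
  proof -
    have "dvars (\<Sum>v\<in>dvars f. pdiff v f * dX (dvar_shift j v)) \<subseteq> (\<Union>v\<in>dvars f. dvars (pdiff v f * dX (dvar_shift j v)))"
      by (rule dvars_sum)
    also have "\<dots> \<subseteq> dvars f \<union> dvar_shift j ` dvars f"
      using dvars_mult dvars_pdiff by fastforce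
    finally show ?thesis using dvars_cmap by blast
  qed
  finally show ?thesis .
qed

lemma valid_shift: "valid_dvar n m v \<Longrightarrow> j < m \<Longrightarrow> valid_dvar n m (dvar_shift j v)"
  by (auto simp: valid_dvar_def dvar_shift_def keys_add_nat)

lemma dpolys_pder: "f \<in> dpolys n m \<Longrightarrow> j < m \<Longrightarrow> pder \<delta> j f \<in> dpolys n m"
  using dvars_pder[of \<delta> j f] by (fastforce simp: dpolys_iff valid_shift)

lemma aux_cong: "(\<And>i. i < k \<Longrightarrow> lk e i = lk e' i) \<Longrightarrow> theta_app_aux \<delta> e k c = theta_app_aux \<delta> e' k c"
  by (induction k) auto

lemma funpow_comm: "f \<circ> g = g \<circ> f \<Longrightarrow> (f ^^ n) (g x) = g ((f ^^ n) x)"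
  by (induction n) (auto simp: fun_eq_iff)

lemma aux_shift:
  assumes "j < k" "\<And>i i'. i < k \<Longrightarrow> i' < k \<Longrightarrow> \<delta> i \<circ> \<delta> i' = \<delta> i' \<circ> \<delta> i"
  shows "theta_app_aux \<delta> (e + sg j 1) k c = \<delta> j (theta_app_aux \<delta> e k c)"
  using assms
proof (induction k)
  case 0 then show ?case by simp
next
  case (Suc k)
  show ?case
  proof (cases "j = k")
    case True
    have "theta_app_aux \<delta> (e + sg j 1) k c = theta_app_aux \<delta> e k c"
      by (rule aux_cong) (auto simp: lookup_plus_nat lookup_single True)
    then show ?thesis using True by (simp add: lookup_plus_nat)
  next
    case False
    then have "j < k" using Suc by simp
    then have "theta_app_aux \<delta> (e + sg j 1) k c = \<delta> j (theta_app_aux \<delta> e k c)"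
      using Suc by simp
    moreover have "\<delta> k \<circ> \<delta> j = \<delta> j \<circ> \<delta> k" using Suc.prems(2)[of k j] \<open>j < k\<close> by (auto simp: comp_def)
    ultimately show ?thesis using False
      by (simp add: lookup_plus_nat lookup_single funpow_comm)
  qed
qed

lemma val_shift:
  assumes "j < m" "\<forall>j<m. \<forall>k<m. \<delta> j \<circ> \<delta> k = \<delta> k \<circ> \<delta> j"
  shows "dvar_val m \<delta> a (dvar_shift j v) = \<delta> j (dvar_val m \<delta> a v)"
proof -
  have "\<And>i i'. i<m \<Longrightarrow> i'<m \<Longrightarrow> \<delta> i \<circ> \<delta> i' = \<delta> i' \<circ> \<delta> i" using assms(2) by blast
  from aux_shift[OF assms(1) this] show ?thesis
    by (simp add: dvar_val_def dvar_shift_def theta_app_def)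
qed

lemma deval_pder:
  assumes "j < m" "\<forall>j<m. is_derivation (\<delta> j)" "\<forall>j<m. \<forall>k<m. \<delta> j \<circ> \<delta> k = \<delta> k \<circ> \<delta> j"
  shows "deval m \<delta> (pder \<delta> j f) a = \<delta> j (deval m \<delta> f a)"
proof -
  have d: "is_derivation (\<delta> j)" using assms by simp
  show ?thesis
  proof (induction f rule: gen_induct)
    case (const c) then show ?case using d by (simp add: pder_const deval_const)
  next
    case (var v) then show ?case using d assms by (simp add: pder_dX deval_dX val_shift)
  next
    case (add p q) then show ?case using d by (simp add: pder_add deval_add der_add)
  next
    case (mult p q) then show ?case using d by (simp add: pder_mult deval_add deval_mult der_mult)
  qed
qed


lemma tau_super:
  assumes "finite S" "dvars f \<subseteq> S"
  shows "tau_eval m \<delta> D f a b = deval m \<delta> (coeff_map D f) a + (\<Sum>v\<in>S. deval m \<delta> (pdiff v f) a * dvar_val m \<delta> b v)"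
proof -
  have "(\<Sum>v\<in>dvars f. deval m \<delta> (pdiff v f) a * dvar_val m \<delta> b v) = (\<Sum>v\<in>S. deval m \<delta> (pdiff v f) a * dvar_val m \<delta> b v)"
    by (rule sum.mono_neutral_left) (use assms in \<open>auto simp: pdiff_notin\<close>)
  then show ?thesis by (simp add: tau_eval_def)
qed

lemma tau_add:
  assumes "is_derivation D"
  shows "tau_eval m \<delta> D (f + g) a b = tau_eval m \<delta> D f a b + tau_eval m \<delta> D g a b"
proof -
  let ?S = "dvars f \<union> dvars g"
  have "tau_eval m \<delta> D (f+g) a b = deval m \<delta> (coeff_map D (f+g)) a + (\<Sum>v\<in>?S. deval m \<delta> (pdiff v (f+g)) a * dvar_val m \<delta> b v)"
    by (rule tau_super) (use dvars_add in auto)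
  moreover have "tau_eval m \<delta> D f a b = deval m \<delta> (coeff_map D f) a + (\<Sum>v\<in>?S. deval m \<delta> (pdiff v f) a * dvar_val m \<delta> b v)"
    by (rule tau_super) auto
  moreover have "tau_eval m \<delta> D g a b = deval m \<delta> (coeff_map D g) a + (\<Sum>v\<in>?S. deval m \<delta> (pdiff v g) a * dvar_val m \<delta> b v)"
    by (rule tau_super) auto
  ultimately show ?thesis using assms
    by (simp add: cmap_add pdiff_add deval_add distrib_right sum.distrib)
qed

lemma tau_mult:
  assumes "is_derivation D"
  shows "tau_eval m \<delta> D (f * g) a b = deval m \<delta> f a * tau_eval m \<delta> D g a b + deval m \<delta> g a * tau_eval m \<delta> D f a b"
proof -
  let ?S = "dvars f \<union> dvars g"
  have "tau_eval m \<delta> D (f*g) a b = deval m \<delta> (coeff_map D (f*g)) a + (\<Sum>v\<in>?S. deval m \<delta> (pdiff v (f*g)) a * dvar_val m \<delta> b v)"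
    by (rule tau_super) (use dvars_mult in auto)
  moreover have "tau_eval m \<delta> D f a b = deval m \<delta> (coeff_map D f) a + (\<Sum>v\<in>?S. deval m \<delta> (pdiff v f) a * dvar_val m \<delta> b v)"
    by (rule tau_super) auto
  moreover have "tau_eval m \<delta> D g a b = deval m \<delta> (coeff_map D g) a + (\<Sum>v\<in>?S. deval m \<delta> (pdiff v g) a * dvar_val m \<delta> b v)"
    by (rule tau_super) auto
  ultimately show ?thesis using assms
    by (simp add: cmap_mult pdiff_mult deval_add deval_mult distrib_right distrib_left sum.distrib
        sum_distrib_left algebra_simps)
qed

lemma tau_const: "is_derivation D \<Longrightarrow> tau_eval m \<delta> D (sg 0 c) a b = D c"
  by (simp add: tau_eval_def cmap_single der_zero deval_const)

lemma tau_dX: "is_derivation D \<Longrightarrow> tau_eval m \<delta> D (dX v) a b = dvar_val m \<delta> b v"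
  by (simp add: tau_eval_def dX_def cmap_single der_zero der_one pdiff_single dvars_single deval_const)

lemma tau_zero[simp]: "tau_eval m \<delta> D (0::'a::field dpoly) a b = 0"
proof -
  have "coeff_map D (0::'a dpoly) = 0" unfolding coeff_map_def by (subst map_eq_zero_iff) simp
  then show ?thesis by (simp add: tau_eval_def)
qed

lemma tau_pder:
  assumes "j < m" "commuting_derivations m \<delta> D"
  shows "tau_eval m \<delta> D (pder \<delta> j f) a b = \<delta> j (tau_eval m \<delta> D f a b)"
proof -
  have dj: "is_derivation (\<delta> j)" and dD: "is_derivation D" and cD: "\<delta> j \<circ> D = D \<circ> \<delta> j"
    and A: "\<forall>j<m. is_derivation (\<delta> j)" and C: "\<forall>j<m. \<forall>k<m. \<delta> j \<circ> \<delta> k = \<delta> k \<circ> \<delta> j"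
    using assms by (auto simp: commuting_derivations_def)
  show ?thesis
  proof (induction f rule: gen_induct)
    case (const c)
    then show ?case using dj dD cD by (simp add: pder_const tau_const fun_eq_iff)
  next
    case (var v) then show ?case using dj dD assms(1) C by (simp add: pder_dX tau_dX val_shift)
  next
    case (add p q) then show ?case using dj dD by (simp add: pder_add tau_add der_add)
  next
    case (mult p q)
    then show ?case using dj dD deval_pder[OF assms(1) A C]
      by (simp add: pder_mult tau_add tau_mult der_add der_mult algebra_simps)
  qed
qed

lemma tau_uminus: "is_derivation D \<Longrightarrow> tau_eval m \<delta> D (- f) a b = - tau_eval m \<delta> D f a b"
  using tau_add[of D m \<delta> f "-f" a b] by (simp add: eq_neg_iff_add_eq_0 add.commute)


lemma delta_ideal_dpolys:
  assumes "S \<subseteq> dpolys n m" "h \<in> delta_ideal n m \<delta> S" shows "h \<in> dpolys n m"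
  using assms(2) by (induction rule: delta_ideal.induct) (use assms(1) in \<open>auto intro: dpolys_add dpolys_mult dpolys_pder dpolys_zero\<close>)

lemma delta_ideal_sub_prime:
  assumes "prime_delta_ideal n m \<delta> P" "S \<subseteq> P" "h \<in> delta_ideal n m \<delta> S" shows "h \<in> P"
  using assms(3) by (induction rule: delta_ideal.induct) (use assms(1,2) in \<open>auto simp: prime_delta_ideal_def\<close>)

lemma delta_ideal_vanish:
  assumes "commuting_derivations m \<delta> D" "\<forall>f\<in>S. deval m \<delta> f a = 0 \<and> tau_eval m \<delta> D f a b = 0"
    and "h \<in> delta_ideal n m \<delta> S"
  shows "deval m \<delta> h a = 0 \<and> tau_eval m \<delta> D h a b = 0"
  using assms(3)
proof (induction h rule: delta_ideal.induct)
  case (gen f) then show ?case using assms by auto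
next
  case zero then show ?case by simp
next
  case (add f g) then show ?case using assms(1) by (simp add: deval_add tau_add commuting_derivations_def)
next
  case (mult r f) then show ?case using assms(1) by (simp add: deval_mult tau_mult commuting_derivations_def)
next
  case (der j f)
  have A: "\<forall>j<m. is_derivation (\<delta> j)" "\<forall>j<m. \<forall>k<m. \<delta> j \<circ> \<delta> k = \<delta> k \<circ> \<delta> j"
    using assms(1) by (auto simp: commuting_derivations_def)
  show ?case using der deval_pder[OF der(1) A] tau_pder[OF der(1) assms(1)] A(1) der_zero by metis
qed

lemma delta_ideal_vanish_deval:
  assumes "commuting_derivations m \<delta> D" "\<forall>f\<in>S. deval m \<delta> f a = 0"
    and "h \<in> delta_ideal n m \<delta> S"
  shows "deval m \<delta> h a = 0"
  using assms(3)
proof (induction h rule: delta_ideal.induct)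
  case (gen f) then show ?case using assms by auto
next
  case zero then show ?case by simp
next
  case (add f g) then show ?case by (simp add: deval_add)
next
  case (mult r f) then show ?case by (simp add: deval_mult)
next
  case (der j f)
  have A: "\<forall>j<m. is_derivation (\<delta> j)" "\<forall>j<m. \<forall>k<m. \<delta> j \<circ> \<delta> k = \<delta> k \<circ> \<delta> j"
    using assms(1) by (auto simp: commuting_derivations_def)
  show ?case using der deval_pder[OF der(1) A] A(1) der_zero by metis
qed

lemma prime_uminus:
  assumes "prime_delta_ideal n m \<delta> P" "f \<in> P"
  shows "- f \<in> P"
proof -
  have "sg 0 (-1) * f \<in> P" using assms(2) dpolys_const[of "-1" n m] assms(1) unfolding prime_delta_ideal_def by blast
  moreover have "sg 0 (-1) * f = - f"
    by (metis mult_minus1 single_one single_uminus)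
  ultimately show ?thesis by simp
qed

lemma prime_diff:
  assumes "prime_delta_ideal n m \<delta> P" "f \<in> P" "g \<in> P"
  shows "f - g \<in> P"
  using prime_uminus[OF assms(1,3)] assms by (auto simp: prime_delta_ideal_def)

lemma prime_mult: "prime_delta_ideal n m \<delta> P \<Longrightarrow> r \<in> dpolys n m \<Longrightarrow> f \<in> P \<Longrightarrow> r * f \<in> P"
  by (auto simp: prime_delta_ideal_def)

lemma prime_power:
  assumes "prime_delta_ideal n m \<delta> P" "f \<in> dpolys n m" "f ^ k \<in> P"
  shows "f \<in> P"
  using assms(3)
proof (induction k)
  case 0 then show ?case using assms(1) by (simp add: prime_delta_ideal_def)
next
  case (Suc k)
  then show ?case using assms(1,2) dpolys_power[OF assms(2), of k]
    unfolding prime_delta_ideal_def by (metis power_Suc)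
qed

lemma prime_prod_notin:
  assumes "prime_delta_ideal n m \<delta> P" "finite S" "\<And>i. i \<in> S \<Longrightarrow> F i \<in> dpolys n m"
    "\<And>i. i \<in> S \<Longrightarrow> F i \<notin> P"
  shows "(\<Prod>i\<in>S. F i) \<notin> P"
  using assms(2-4)
proof (induction S rule: finite_induct)
  case empty then show ?case using assms(1) by (simp add: prime_delta_ideal_def)
next
  case (insert x S)
  have "(\<Prod>i\<in>S. F i) \<in> dpolys n m" using insert by (intro dpolys_prod) auto
  moreover have "F x \<in> dpolys n m" "F x \<notin> P" using insert by auto
  ultimately show ?case using insert assms(1) unfolding prime_delta_ideal_def by (simp, blast)
qed

lemma prime_const_zero:
  assumes "prime_delta_ideal n m \<delta> P" "sg 0 c \<in> P"
  shows "c = 0"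
proof (rule ccontr)
  assume "c \<noteq> 0"
  have "sg 0 (inverse c) * sg 0 c \<in> P" using assms(2) dpolys_const[of "inverse c" n m] assms(1) unfolding prime_delta_ideal_def by blast
  then have "1 \<in> P" using \<open>c \<noteq> 0\<close> by (simp add: mult_single)
  then show False using assms(1) by (simp add: prime_delta_ideal_def)
qed


context
  fixes n m :: nat and rk :: "dvar \<Rightarrow> dvar \<Rightarrow> bool"
  assumes RK: "is_ranking n m rk"
begin

lemma rk_irrefl: "\<not> rk u u" using RK unfolding is_ranking_def by blast
lemma rk_trans: "rk u v \<Longrightarrow> rk v w \<Longrightarrow> rk u w" using RK unfolding is_ranking_def by blast
lemma rk_total: "valid_dvar n m u \<Longrightarrow> valid_dvar n m v \<Longrightarrow> u = v \<or> rk u v \<or> rk v u"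
  using RK unfolding is_ranking_def by blast
lemma rk_shift: "valid_dvar n m u \<Longrightarrow> j < m \<Longrightarrow> rk u (dvar_shift j u)"
  using RK unfolding is_ranking_def by blast
lemma rk_shift_mono: "valid_dvar n m u \<Longrightarrow> valid_dvar n m v \<Longrightarrow> j < m \<Longrightarrow> rk u v \<Longrightarrow> rk (dvar_shift j u) (dvar_shift j v)"
  using RK unfolding is_ranking_def by blast
lemma rk_asym: "rk u v \<Longrightarrow> \<not> rk v u" using rk_trans rk_irrefl by blast

definition psum :: "(nat \<Rightarrow>\<^sub>0 nat) \<Rightarrow> nat" where "psum e = sum (lk e) (ks e)"

lemma psum_super: "finite S \<Longrightarrow> ks e \<subseteq> S \<Longrightarrow> psum e = sum (lk e) S"
  unfolding psum_def by (rule sum.mono_neutral_left) (auto simp: in_keys_iff)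

lemma rk_deriv_aux:
  "valid_dvar n m u \<Longrightarrow> ks e \<subseteq> {..<m} \<Longrightarrow> e \<noteq> 0 \<Longrightarrow> psum e = N \<Longrightarrow> rk u (fst u, snd u + e)"
proof (induction N arbitrary: e rule: less_induct)
  case (less N)
  obtain j where j: "j \<in> ks e" using less.prems(3) by (metis all_not_in_conv keys_eq_empty)
  then have jm: "j < m" using less.prems(2) by auto
  define e' where "e' = e - sg j 1"
  have ee: "e = e' + sg j 1"
    using j by (intro poly_mapping_eqI) (auto simp: e'_def lookup_minus_nat lookup_plus_nat lookup_single when_def in_keys_iff)
  have ke': "ks e' \<subseteq> ks e" by (auto simp: e'_def in_keys_iff lookup_minus_nat)
  have eq: "(fst u, snd u + e) = dvar_shift j (fst u, snd u + e')"
    by (simp add: ee dvar_shift_def add.assoc)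
  show ?case
  proof (cases "e' = 0")
    case True
    then show ?thesis using eq rk_shift[OF less.prems(1) jm] by simp
  next
    case False
    have "psum e = sum (lk e) (ks e)" by (simp add: psum_def)
    also have "\<dots> = sum (\<lambda>k. lk e' k + (1 when j = k)) (ks e)"
      by (subst ee) (simp add: lookup_plus_nat lookup_single)
    also have "\<dots> = psum e' + 1"
      using j by (simp add: sum.distrib psum_super[OF _ ke'] when_def)
    finally have lt: "psum e' < N" using less.prems(4) by simp
    have v': "valid_dvar n m (fst u, snd u + e')"
      using less.prems(1,2) ke' by (auto simp: valid_dvar_def keys_add_nat)
    have "rk u (fst u, snd u + e')" using less.IH[OF lt less.prems(1) _ False refl] ke' less.prems(2) by blast
    moreover have "rk (fst u, snd u + e') (fst u, snd u + e)" using eq rk_shift[OF v' jm] by simp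
    ultimately show ?thesis using rk_trans by blast
  qed
qed

lemma rk_deriv: "valid_dvar n m u \<Longrightarrow> ks e \<subseteq> {..<m} \<Longrightarrow> e \<noteq> 0 \<Longrightarrow> rk u (fst u, snd u + e)"
  using rk_deriv_aux by blast

lemma rk_proper:
  assumes "valid_dvar n m u" "valid_dvar n m w" "proper_derivative w u"
  shows "rk u w"
proof -
  define e where "e = snd w - snd u"
  have le: "\<forall>j. lk (snd u) j \<le> lk (snd w) j" using assms(3) by (simp add: proper_derivative_def)
  have sw: "snd w = snd u + e"
    using le by (intro poly_mapping_eqI) (simp add: e_def lookup_minus_nat lookup_plus_nat)
  have "e \<noteq> 0" using sw assms(3) by (auto simp: proper_derivative_def)
  moreover have "ks e \<subseteq> {..<m}"
  proof
    fix x assume "x \<in> ks e"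
    then have "x \<in> ks (snd w)" by (auto simp: e_def in_keys_iff lookup_minus_nat)
    then show "x \<in> {..<m}" using assms(2) by (auto simp: valid_dvar_def)
  qed
  ultimately have "rk u (fst u, snd u + e)" using rk_deriv assms(1) by blast
  moreover have "w = (fst u, snd u + e)" using sw assms(3) by (simp add: proper_derivative_def prod_eq_iff)
  ultimately show ?thesis by simp
qed

lemma proper_not_below:
  assumes "valid_dvar n m u" "valid_dvar n m w" "proper_derivative w u"
  shows "\<not> rk w u \<and> w \<noteq> u"
  using rk_proper[OF assms] rk_asym rk_irrefl by blast

definition RR where "RR = {(v,w). valid_dvar n m v \<and> valid_dvar n m w \<and> rk v w}"

lemma wf_noloop: "(\<And>x y z. (x,y) \<in> R \<Longrightarrow> (y,z) \<in> R \<Longrightarrow> False) \<Longrightarrow> wf R"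
proof -
  assume "\<And>x y z. (x,y) \<in> R \<Longrightarrow> (y,z) \<in> R \<Longrightarrow> False"
  then have "R O R = {}" by blast
  then show "wf R" using wf_comp_self[of R] by simp
qed

lemma wf_RR: "wf RR"
proof (rule trans_disj_wf_implies_wf)
  show "trans RR" unfolding RR_def trans_def using rk_trans by blast
  define T where "T i = (if i < m then {(v::dvar,w::dvar). lk (snd v) i < lk (snd w) i}
     else {(v,w). fst v = (i - m) div n \<and> fst w = (i - m) mod n \<and> (i - m) div n \<noteq> (i - m) mod n})" for i
  have "\<forall>i<m + n*n. wf (T i)"
  proof (intro allI impI)
    fix i assume "i < m + n*n"
    show "wf (T i)"
    proof (cases "i < m")
      case True
      have "T i = inv_image {(x,y). x < y} (\<lambda>v. lk (snd v) i)" using True by (auto simp: T_def)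
      then show ?thesis using wf_less by simp
    next
      case False
      show ?thesis
      proof (rule wf_noloop)
        fix x y z assume "(x,y) \<in> T i" "(y,z) \<in> T i"
        then have "fst y = (i - m) mod n" "fst y = (i - m) div n" "(i - m) div n \<noteq> (i - m) mod n"
          using False unfolding T_def by auto
        then show False by simp
      qed
    qed
  qed
  moreover have "RR \<subseteq> (\<Union>i<m + n*n. T i)"
  proof
    fix x assume "x \<in> RR"
    then obtain v w where x: "x = (v,w)" and v: "valid_dvar n m v" and w: "valid_dvar n m w" and r: "rk v w"
      by (auto simp: RR_def)
    show "x \<in> (\<Union>i<m + n*n. T i)"
    proof (cases "fst v = fst w")
      case False
      define i where "i = m + (fst v * n + fst w)"
      have fv: "fst v < n" "fst w < n" using v w by (auto simp: valid_dvar_def)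
      have "fst v * n + fst w < (fst v + 1) * n" using fv by simp
      moreover have "(fst v + 1) * n \<le> n * n" using fv by (intro mult_le_mono1) simp
      ultimately have "fst v * n + fst w < n * n" by linarith
      then have "i < m + n*n" by (simp add: i_def)
      moreover have "(fst v * n + fst w) div n = fst v" "(fst v * n + fst w) mod n = fst w" using fv by auto
      moreover have "(v,w) \<in> T i"
        using False \<open>(fst v * n + fst w) div n = fst v\<close> \<open>(fst v * n + fst w) mod n = fst w\<close>
        unfolding T_def i_def by simp
      ultimately show ?thesis unfolding x by (intro UN_I[of i]) simp_all
    next
      case True
      have "\<exists>k<m. lk (snd v) k < lk (snd w) k"
      proof (rule ccontr)
        assume "\<not> ?thesis"
        have le: "\<forall>k. lk (snd w) k \<le> lk (snd v) k"
        proof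
          fix k
          show "lk (snd w) k \<le> lk (snd v) k"
          proof (cases "k < m")
            case True then show ?thesis using \<open>\<not> (\<exists>k<m. lk (snd v) k < lk (snd w) k)\<close> by auto
          next
            case False
            then have "k \<notin> ks (snd w)" using w by (auto simp: valid_dvar_def)
            then show ?thesis by (simp add: in_keys_iff)
          qed
        qed
        show False
        proof (cases "snd v = snd w")
          case True then have "v = w" using \<open>fst v = fst w\<close> by (simp add: prod_eq_iff)
          then show False using r rk_irrefl by simp
        next
          case False
          then have "proper_derivative v w" using le \<open>fst v = fst w\<close> by (simp add: proper_derivative_def)
          then have "rk w v" using rk_proper w v by blast
          then show False using r rk_asym by blast
        qed
      qed
      then obtain k where k: "k < m" "lk (snd v) k < lk (snd w) k" by blast
      then have "(v,w) \<in> T k" unfolding T_def by simp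
      then show ?thesis unfolding x using k by (intro UN_I[of k]) simp_all
    qed
  qed
  ultimately show "disj_wf RR" unfolding disj_wf by (intro exI[of _ T] exI[of _ "m+n*n"] conjI)
qed

lemma max_exists:
  "finite S \<Longrightarrow> S \<noteq> {} \<Longrightarrow> (\<forall>v\<in>S. valid_dvar n m v) \<Longrightarrow> \<exists>w\<in>S. \<forall>v\<in>S. v \<noteq> w \<longrightarrow> rk v w"
proof (induction S rule: finite_ne_induct)
  case (singleton x) then show ?case by simp
next
  case (insert x F)
  then obtain w where w: "w \<in> F" "\<forall>v\<in>F. v \<noteq> w \<longrightarrow> rk v w" by auto
  have "x = w \<or> rk x w \<or> rk w x" using rk_total insert w by auto
  then show ?case
  proof (elim disjE)
    assume "rk w x"
    have "\<forall>v\<in>insert x F. v \<noteq> x \<longrightarrow> rk v x"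
    proof (intro ballI impI)
      fix v assume "v \<in> insert x F" "v \<noteq> x"
      then have "v \<in> F" by simp
      show "rk v x"
      proof (cases "v = w")
        case True then show ?thesis using \<open>rk w x\<close> by simp
      next
        case False then show ?thesis using w \<open>v \<in> F\<close> \<open>rk w x\<close> rk_trans by blast
      qed
    qed
    then show ?thesis by blast
  next
    assume "x = w" then show ?thesis using w insert.hyps(2) by blast
  next
    assume "rk x w"
    have "\<forall>v\<in>insert x F. v \<noteq> w \<longrightarrow> rk v w" using \<open>rk x w\<close> w(2) by blast
    then show ?thesis using w(1) by blast
  qed
qed

lemma leader_props:
  assumes "f \<in> dpolys n m" "\<not> is_const f"
  shows "leader rk f \<in> dvars f" "\<And>w. w \<in> dvars f \<Longrightarrow> w \<noteq> leader rk f \<Longrightarrow> rk w (leader rk f)"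
proof -
  have val: "\<forall>v\<in>dvars f. valid_dvar n m v" using assms(1) by (simp add: dpolys_iff)
  obtain w where w: "w \<in> dvars f" "\<forall>v\<in>dvars f. v \<noteq> w \<longrightarrow> rk v w"
    using max_exists[of "dvars f"] assms(2) val by (auto simp: is_const_def)
  have ex: "\<exists>!v. v \<in> dvars f \<and> (\<forall>w\<in>dvars f. w \<noteq> v \<longrightarrow> rk w v)"
  proof (rule ex1I[of _ w])
    show "w \<in> dvars f \<and> (\<forall>v\<in>dvars f. v \<noteq> w \<longrightarrow> rk v w)" using w by blast
  next
    fix y assume y: "y \<in> dvars f \<and> (\<forall>w\<in>dvars f. w \<noteq> y \<longrightarrow> rk w y)"
    show "y = w"
    proof (rule ccontr)
      assume "y \<noteq> w"
      then have "rk y w" "rk w y" using w y by auto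
      then show False using rk_asym by blast
    qed
  qed
  have L: "leader rk f \<in> dvars f \<and> (\<forall>w\<in>dvars f. w \<noteq> leader rk f \<longrightarrow> rk w (leader rk f))"
    unfolding leader_def by (rule theI'[OF ex])
  then show "leader rk f \<in> dvars f" by (rule conjunct1)
  fix w assume "w \<in> dvars f" "w \<noteq> leader rk f"
  then show "rk w (leader rk f)" using L by blast
qed

lemma leader_valid: "f \<in> dpolys n m \<Longrightarrow> \<not> is_const f \<Longrightarrow> valid_dvar n m (leader rk f)"
  using leader_props(1) by (auto simp: dpolys_iff)

end


definition bnd :: "dvar \<Rightarrow> nat \<Rightarrow> 'a::zero dpoly \<Rightarrow> bool" where
  "bnd v N p \<longleftrightarrow> (\<forall>\<mu>\<in>ks p. lk \<mu> v \<le> N)"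

lemma bnd_zero[simp]: "bnd v N 0" by (simp add: bnd_def)

lemma bnd_add: "bnd v N p \<Longrightarrow> bnd v N q \<Longrightarrow> bnd v N (p + q)"
  unfolding bnd_def
proof
  fix \<mu> assume A: "\<forall>\<mu>\<in>ks p. lk \<mu> v \<le> N" "\<forall>\<mu>\<in>ks q. lk \<mu> v \<le> N" and "\<mu> \<in> ks (p + q)"
  have "\<mu> \<in> ks p \<union> ks q" using subsetD[OF keys_add \<open>\<mu> \<in> ks (p + q)\<close>] .
  then show "lk \<mu> v \<le> N" using A by (elim UnE) auto
qed

lemma bnd_uminus: "bnd v N (- p) = bnd v N (p :: 'a::ab_group_add dpoly)"
  by (simp add: bnd_def keys_minus)

lemma bnd_diff: "bnd v N p \<Longrightarrow> bnd v N q \<Longrightarrow> bnd v N (p - q :: 'a::ab_group_add dpoly)"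
  using bnd_add[of v N p "-q"] by (simp add: bnd_uminus)

lemma bnd_mult: "bnd v N1 p \<Longrightarrow> bnd v N2 q \<Longrightarrow> bnd v (N1 + N2) (p * q)"
  unfolding bnd_def
proof
  fix \<mu> assume A: "\<forall>\<mu>\<in>ks p. lk \<mu> v \<le> N1" "\<forall>\<mu>\<in>ks q. lk \<mu> v \<le> N2" and "\<mu> \<in> ks (p * q)"
  then obtain a b where "a \<in> ks p" "b \<in> ks q" "\<mu> = a + b" using keys_mult by blast
  then show "lk \<mu> v \<le> N1 + N2" using A by (simp add: lookup_plus_nat add_mono)
qed

lemma bnd_mono: "N \<le> N' \<Longrightarrow> bnd v N p \<Longrightarrow> bnd v N' p"
  by (auto simp: bnd_def)

lemma bnd_notin: "v \<notin> dvars p \<Longrightarrow> bnd v 0 p"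
  by (auto simp: bnd_def dvars_def in_keys_iff)

lemma bnd_notin': "v \<notin> dvars p \<Longrightarrow> bnd v N p"
  using bnd_notin bnd_mono by blast

lemma bnd_0_notin: "bnd v 0 p \<Longrightarrow> v \<notin> dvars p"
  by (auto simp: bnd_def dvars_def in_keys_iff)

lemma bnd_dX_power: "bnd w k ((dX w :: 'a::comm_semiring_1 dpoly) ^ k)"
  by (simp add: dX_power bnd_def lookup_single when_def)

lemma bnd_mult_0: "bnd v 0 p \<Longrightarrow> bnd v N q \<Longrightarrow> bnd v N (p * q)"
  using bnd_mult[of v 0 p N q] by simp

lemma bnd_mult_0': "bnd v N p \<Longrightarrow> bnd v 0 q \<Longrightarrow> bnd v N (p * q)"
  using bnd_mult[of v N p 0 q] by simp

lemma degree_in_le: "degree_in v p \<le> N \<longleftrightarrow> bnd v N p"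
  by (auto simp: degree_in_def bnd_def)

lemma bnd_degree_in: "bnd v (degree_in v p) p"
  using degree_in_le by blast

lemma degree_in_pos: "v \<in> dvars p \<Longrightarrow> 1 \<le> degree_in v p"
proof (rule ccontr)
  assume "v \<in> dvars p" "\<not> 1 \<le> degree_in v p"
  then have "bnd v 0 p" using degree_in_le[of v p 0] by simp
  then show False using bnd_0_notin \<open>v \<in> dvars p\<close> by blast
qed

lemma degree_in_notin: "v \<notin> dvars p \<Longrightarrow> degree_in v p = 0"
  using degree_in_le[of v p 0] bnd_notin by simp

lemma lookup_sum_single: "finite A \<Longrightarrow> lk (\<Sum>\<mu>\<in>A. sg \<mu> (g \<mu>)) k = (if k \<in> A then g k else 0)"
  by (simp add: lookup_sum lookup_single when_def)

lemma lookup_coeff_in_aux: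
  "ks (coeff_in w k p) \<subseteq> (\<lambda>\<mu>. \<mu> - sg w k) ` {\<mu>\<in>ks p. lk \<mu> w = k}"
proof -
  have "ks (coeff_in w k p) \<subseteq> (\<Union>\<mu>\<in>{\<mu>\<in>ks p. lk \<mu> w = k}. ks (sg (\<mu> - sg w k) (lk p \<mu>)))"
    unfolding coeff_in_def by (rule keys_sum)
  also have "\<dots> \<subseteq> (\<lambda>\<mu>. \<mu> - sg w k) ` {\<mu>\<in>ks p. lk \<mu> w = k}" by auto
  finally show ?thesis .
qed

lemma dvars_coeff_in: "dvars (coeff_in w k p) \<subseteq> dvars p - {w}"
proof
  fix v assume "v \<in> dvars (coeff_in w k p)"
  then obtain \<nu> where "\<nu> \<in> ks (coeff_in w k p)" "v \<in> ks \<nu>" by (auto simp: dvars_def)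
  then obtain \<mu> where "\<mu> \<in> ks p" "lk \<mu> w = k" "\<nu> = \<mu> - sg w k" using lookup_coeff_in_aux by blast
  then have "lk \<mu> v \<noteq> 0" "v \<noteq> w" using \<open>v \<in> ks \<nu>\<close>
    by (auto simp: in_keys_iff lookup_minus_nat lookup_single)
  then show "v \<in> dvars p - {w}" using \<open>\<mu> \<in> ks p\<close> by (auto simp: dvars_def in_keys_iff)
qed

lemma bnd_coeff_in: "bnd v N p \<Longrightarrow> bnd v N (coeff_in w k p)"
  unfolding bnd_def using lookup_coeff_in_aux by (fastforce simp: lookup_minus_nat)

lemma decomp:
  fixes p :: "'a::field dpoly"
  assumes "bnd w N p"
  shows "\<exists>p0. p = coeff_in w N p * dX w ^ N + p0 \<and> bnd w (N - 1) p0 \<and> ks p0 \<subseteq> ks p"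
proof -
  let ?A = "{\<mu>\<in>ks p. lk \<mu> w = N}"
  define p0 where "p0 = (\<Sum>\<mu>\<in>ks p - ?A. sg \<mu> (lk p \<mu>))"
  have "coeff_in w N p * dX w ^ N = (\<Sum>\<mu>\<in>?A. sg (\<mu> - sg w N) (lk p \<mu>) * sg (sg w N) 1)"
    by (simp add: coeff_in_def dX_power sum_distrib_right)
  also have "\<dots> = (\<Sum>\<mu>\<in>?A. sg \<mu> (lk p \<mu>))"
  proof (rule sum.cong)
    fix \<mu> assume "\<mu> \<in> ?A"
    then have "\<mu> - sg w N + sg w N = \<mu>"
      by (intro poly_mapping_eqI) (auto simp: lookup_minus_nat lookup_plus_nat lookup_single when_def)
    then show "sg (\<mu> - sg w N) (lk p \<mu>) * sg (sg w N) 1 = sg \<mu> (lk p \<mu>)" by (simp add: mult_single)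
  qed simp
  finally have c: "coeff_in w N p * dX w ^ N = (\<Sum>\<mu>\<in>?A. sg \<mu> (lk p \<mu>))" .
  have "p = (\<Sum>\<mu>\<in>ks p. sg \<mu> (lk p \<mu>))" by (rule pm_expand)
  also have "\<dots> = (\<Sum>\<mu>\<in>ks p \<inter> ?A. sg \<mu> (lk p \<mu>)) + (\<Sum>\<mu>\<in>ks p - ?A. sg \<mu> (lk p \<mu>))"
    by (rule sum.Int_Diff) simp
  also have "ks p \<inter> ?A = ?A" by auto
  finally have "p = coeff_in w N p * dX w ^ N + p0" using c by (simp add: p0_def)
  moreover have kp0: "ks p0 \<subseteq> ks p - ?A"
    by (auto simp: p0_def in_keys_iff lookup_sum_single split: if_splits)
  moreover have "bnd w (N - 1) p0"
    using kp0 assms unfolding bnd_def by fastforce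
  ultimately show ?thesis by blast
qed

lemma keys_pdiff: "ks (pdiff w p) \<subseteq> (\<lambda>\<mu>. \<mu> - sg w 1) ` {\<mu>\<in>ks p. lk \<mu> w \<noteq> 0}"
proof -
  have "ks (pdiff w p) \<subseteq> (\<Union>\<mu>\<in>ks p. ks (sg (\<mu> - sg w 1) (lk p \<mu> * of_nat (lk \<mu> w))))"
    unfolding pdiff_def by (rule keys_sum)
  also have "\<dots> \<subseteq> (\<lambda>\<mu>. \<mu> - sg w 1) ` {\<mu>\<in>ks p. lk \<mu> w \<noteq> 0}"
  proof
    fix x assume "x \<in> (\<Union>\<mu>\<in>ks p. ks (sg (\<mu> - sg w 1) (lk p \<mu> * of_nat (lk \<mu> w))))"
    then obtain \<mu> where "\<mu> \<in> ks p" "x \<in> ks (sg (\<mu> - sg w 1) (lk p \<mu> * of_nat (lk \<mu> w)))" by blast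
    then have "x = \<mu> - sg w 1" "of_nat (lk \<mu> w) \<noteq> (0::'a)" by (auto split: if_splits)
    then have "x = \<mu> - sg w 1" "lk \<mu> w \<noteq> 0" by (metis of_nat_0)+
    then show "x \<in> (\<lambda>\<mu>. \<mu> - sg w 1) ` {\<mu>\<in>ks p. lk \<mu> w \<noteq> 0}" using \<open>\<mu> \<in> ks p\<close> by blast
  qed
  finally show ?thesis .
qed

lemma bnd_pdiff: "bnd v N p \<Longrightarrow> bnd v N (pdiff w p)"
  unfolding bnd_def using keys_pdiff by (fastforce simp: lookup_minus_nat)

lemma bnd_pdiff_self: "bnd w N p \<Longrightarrow> bnd w (N - 1) (pdiff w p)"
  unfolding bnd_def using keys_pdiff by (fastforce simp: lookup_minus_nat lookup_single)

lemma pseudo_div: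
  fixes f g I f0 :: "'a::field dpoly"
  assumes f: "f = I * dX w ^ d + f0" and wI: "w \<notin> dvars I" and bf0: "bnd w (d - 1) f0" and d: "d \<ge> 1"
  shows "bnd w N g \<Longrightarrow> \<exists>k q r. I ^ k * g = q * f + r \<and> bnd w (d - 1) r \<and>
           dvars r \<subseteq> dvars g \<union> dvars I \<union> dvars f0 \<union> {w} \<and>
           dvars q \<subseteq> dvars g \<union> dvars I \<union> dvars f0 \<union> {w} \<and>
           (\<forall>v M. v \<noteq> w \<longrightarrow> v \<notin> dvars I \<longrightarrow> v \<notin> dvars f0 \<longrightarrow> bnd v M g \<longrightarrow> bnd v M r)"
proof (induction N arbitrary: g rule: less_induct)
  case (less N)
  show ?case
  proof (cases "N \<le> d - 1")
    case True
    then have "bnd w (d - 1) g" using less.prems bnd_mono by blast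
    then show ?thesis by (intro exI[of _ 0] exI[of _ 0] exI[of _ g]) auto
  next
    case False
    then have Nd: "N \<ge> d" "N \<ge> 1" using d by auto
    obtain g0 where g0: "g = coeff_in w N g * dX w ^ N + g0" "bnd w (N - 1) g0" "ks g0 \<subseteq> ks g"
      using decomp[OF less.prems] by blast
    define c where "c = coeff_in w N g"
    have dg0: "dvars g0 \<subseteq> dvars g" using g0(3) by (auto simp: dvars_def)
    have dc: "dvars c \<subseteq> dvars g - {w}" unfolding c_def by (rule dvars_coeff_in)
    define g' where "g' = I * g0 - c * dX w ^ (N - d) * f0"
    have bg': "bnd w (N - 1) g'"
    proof -
      have "bnd w (N - 1) (I * g0)" using bnd_mult_0[OF bnd_notin[OF wI] g0(2)] .
      moreover have "bnd w (0 + (N - d) + (d - 1)) (c * dX w ^ (N - d) * f0)"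
        by (intro bnd_mult bnd_dX_power bf0 bnd_notin) (use dc in auto)
      moreover have "0 + (N - d) + (d - 1) = N - 1" using Nd d by arith
      ultimately show ?thesis unfolding g'_def by (intro bnd_diff) auto
    qed
    have "N - 1 < N" using Nd by simp
    from less.IH[OF this bg'] obtain k q r where kqr: "I ^ k * g' = q * f + r" "bnd w (d - 1) r"
      "dvars r \<subseteq> dvars g' \<union> dvars I \<union> dvars f0 \<union> {w}"
      "dvars q \<subseteq> dvars g' \<union> dvars I \<union> dvars f0 \<union> {w}"
      "\<forall>v M. v \<noteq> w \<longrightarrow> v \<notin> dvars I \<longrightarrow> v \<notin> dvars f0 \<longrightarrow> bnd v M g' \<longrightarrow> bnd v M r"
      by blast
    have XN: "(dX w :: 'a dpoly) ^ N = dX w ^ (N - d) * dX w ^ d"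
      using Nd by (simp add: power_add[symmetric])
    have gg: "g = c * dX w ^ N + g0" unfolding c_def by (rule g0(1))
    have e1: "I ^ Suc k * g = I ^ k * (I * (c * dX w ^ N) + I * g0)"
      by (subst gg) (simp add: algebra_simps)
    have e2: "I * (c * dX w ^ N) = c * dX w ^ (N - d) * (f - f0)"
      by (simp add: f XN algebra_simps)
    have e3: "I ^ k * (c * dX w ^ (N - d) * (f - f0) + I * g0) = I ^ k * c * dX w ^ (N - d) * f + I ^ k * g'"
      by (simp add: g'_def algebra_simps)
    have e4: "I ^ k * c * dX w ^ (N - d) * f + I ^ k * g' = (I ^ k * c * dX w ^ (N - d) + q) * f + r"
      using kqr(1) by (simp add: algebra_simps)
    have eq: "I ^ Suc k * g = (I ^ k * c * dX w ^ (N - d) + q) * f + r"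
      using e1 e2 e3 e4 by simp
    have dg': "dvars g' \<subseteq> dvars g \<union> dvars I \<union> dvars f0 \<union> {w}"
    proof -
      have "dvars g' \<subseteq> dvars (I * g0) \<union> dvars (c * dX w ^ (N - d) * f0)"
        unfolding g'_def by (rule dvars_diff)
      also have "\<dots> \<subseteq> dvars g \<union> dvars I \<union> dvars f0 \<union> {w}"
        using dvars_mult[of I g0] dvars_mult[of "c * dX w ^ (N - d)" f0] dvars_mult[of c "dX w ^ (N - d)"]
          dvars_power[of "dX w :: 'a dpoly" "N - d"] dg0 dc by auto
      finally show ?thesis .
    qed
    have df: "dvars f \<subseteq> dvars I \<union> dvars f0 \<union> {w}"
      using f dvars_add[of "I * dX w ^ d" f0] dvars_mult[of I "dX w ^ d"] dvars_power[of "dX w :: 'a dpoly" d] by auto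
    have dA: "dvars (I ^ k * c * dX w ^ (N - d)) \<subseteq> dvars g \<union> dvars I \<union> dvars f0 \<union> {w}"
    proof
      fix x assume "x \<in> dvars (I ^ k * c * dX w ^ (N - d))"
      then have "x \<in> dvars (I ^ k) \<or> x \<in> dvars c \<or> x \<in> dvars (dX w ^ (N - d) :: 'a dpoly)"
        using dvars_mult[of "I ^ k * c" "dX w ^ (N - d)"] dvars_mult[of "I ^ k" c] by blast
      then show "x \<in> dvars g \<union> dvars I \<union> dvars f0 \<union> {w}"
        using dvars_power[of I k] dvars_power[of "dX w :: 'a dpoly" "N - d"] dc by auto
    qed
    have dq: "dvars (I ^ k * c * dX w ^ (N - d) + q) \<subseteq> dvars g \<union> dvars I \<union> dvars f0 \<union> {w}"
    proof
      fix x assume "x \<in> dvars (I ^ k * c * dX w ^ (N - d) + q)"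
      then have "x \<in> dvars (I ^ k * c * dX w ^ (N - d)) \<or> x \<in> dvars q"
        using dvars_add by blast
      then show "x \<in> dvars g \<union> dvars I \<union> dvars f0 \<union> {w}"
      proof
        assume "x \<in> dvars q"
        then have "x \<in> dvars g' \<union> dvars I \<union> dvars f0 \<union> {w}" using kqr(4) by blast
        then show ?thesis using dg' by blast
      qed (use dA in blast)
    qed
    have dr: "dvars r \<subseteq> dvars g \<union> dvars I \<union> dvars f0 \<union> {w}"
    proof
      fix x assume "x \<in> dvars r"
      then have "x \<in> dvars g' \<union> dvars I \<union> dvars f0 \<union> {w}" using kqr(3) by blast
      then show "x \<in> dvars g \<union> dvars I \<union> dvars f0 \<union> {w}" using dg' by blast
    qed
    have pres: "\<forall>v M. v \<noteq> w \<longrightarrow> v \<notin> dvars I \<longrightarrow> v \<notin> dvars f0 \<longrightarrow> bnd v M g \<longrightarrow> bnd v M r"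
    proof (intro allI impI)
      fix v M assume v: "v \<noteq> w" "v \<notin> dvars I" "v \<notin> dvars f0" "bnd v M g"
      have "bnd v M g0" using v(4) g0(3) by (auto simp: bnd_def)
      moreover have "bnd v M c" using v(4) unfolding c_def by (rule bnd_coeff_in)
      moreover have "v \<notin> dvars (dX w ^ (N - d) :: 'a dpoly)"
        using dvars_power[of "dX w :: 'a dpoly" "N - d"] v(1) by auto
      ultimately have "bnd v M g'"
        unfolding g'_def
        by (intro bnd_diff bnd_mult_0[OF bnd_notin[OF v(2)]] bnd_mult_0'[OF _ bnd_notin[OF v(3)]]
            bnd_mult_0'[OF _ bnd_notin]) auto
      then show "bnd v M r" using kqr(5) v by blast
    qed
    show ?thesis
      using eq kqr(2) dr dq pres
      by (intro exI[of _ "Suc k"] exI[of _ "I ^ k * c * dX w ^ (N - d) + q"] exI[of _ r] conjI) assumption+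
  qed
qed


definition lin :: "nat \<Rightarrow> nat \<Rightarrow> (dvar \<Rightarrow> dvar \<Rightarrow> bool) \<Rightarrow> 'a::field dpoly \<Rightarrow> dvar \<Rightarrow> 'a dpoly \<Rightarrow> bool" where
  "lin n m rk g w S \<longleftrightarrow> valid_dvar n m w \<and>
     (\<exists>T. g = S * dX w + T \<and> (\<forall>v\<in>dvars T \<union> dvars S. valid_dvar n m v \<and> rk v w))"

context
  fixes n m :: nat and rk :: "dvar \<Rightarrow> dvar \<Rightarrow> bool"
  assumes RK: "is_ranking n m rk"
begin

lemmas rkT_9 = rk_trans[OF RK] and rkI_9 = rk_irrefl[OF RK] and rkS_9 = rk_shift[OF RK]
  and rkSM_9 = rk_shift_mono[OF RK] and rkA_9 = rk_asym[OF RK]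

lemma lin_first:
  assumes "g \<in> dpolys n m" "\<not> is_const g" "j < m" "is_derivation (\<delta> j)"
  shows "lin n m rk (pder \<delta> j g) (dvar_shift j (leader rk g)) (pdiff (leader rk g) g)"
proof -
  let ?w = "leader rk g"
  have wv: "?w \<in> dvars g" using leader_props(1)[OF RK assms(1,2)] .
  have below: "\<And>v. v \<in> dvars g \<Longrightarrow> v \<noteq> ?w \<Longrightarrow> rk v ?w" using leader_props(2)[OF RK assms(1,2)] by blast
  have val: "\<And>v. v \<in> dvars g \<Longrightarrow> valid_dvar n m v" using assms(1) by (simp add: dpolys_iff)
  have vw: "valid_dvar n m ?w" using val wv .
  have ws: "rk ?w (dvar_shift j ?w)" using rkS_9[OF vw assms(3)] .
  have le_s: "\<And>v. v \<in> dvars g \<Longrightarrow> rk v (dvar_shift j ?w)"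
  proof -
    fix v assume "v \<in> dvars g"
    then show "rk v (dvar_shift j ?w)"
      using below[of v] ws rkT_9 by (cases "v = ?w") blast+
  qed
  define T where "T = coeff_map (\<delta> j) g + (\<Sum>v\<in>dvars g - {?w}. pdiff v g * dX (dvar_shift j v))"
  have eq: "pder \<delta> j g = pdiff ?w g * dX (dvar_shift j ?w) + T"
    unfolding pder_def T_def using wv by (simp add: sum.remove algebra_simps)
  have dT: "dvars T \<subseteq> dvars g \<union> dvar_shift j ` (dvars g - {?w})"
  proof -
    have "dvars T \<subseteq> dvars (coeff_map (\<delta> j) g) \<union> dvars (\<Sum>v\<in>dvars g - {?w}. pdiff v g * dX (dvar_shift j v))"
      unfolding T_def by (rule dvars_add)
    moreover have "dvars (\<Sum>v\<in>dvars g - {?w}. pdiff v g * dX (dvar_shift j v)) \<subseteq> (\<Union>v\<in>dvars g - {?w}. dvars (pdiff v g * dX (dvar_shift j v)))"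
      by (rule dvars_sum)
    moreover have "\<And>v. dvars (pdiff v g * dX (dvar_shift j v)) \<subseteq> dvars g \<union> {dvar_shift j v}"
    proof -
      fix v
      have "dvars (pdiff v g * dX (dvar_shift j v)) \<subseteq> dvars (pdiff v g) \<union> dvars (dX (dvar_shift j v) :: 'a dpoly)"
        by (rule dvars_mult)
      then show "dvars (pdiff v g * dX (dvar_shift j v)) \<subseteq> dvars g \<union> {dvar_shift j v}"
        using dvars_pdiff[of v g] by auto
    qed
    ultimately show ?thesis using dvars_cmap[of "\<delta> j" g] by blast
  qed
  have "\<forall>v\<in>dvars T \<union> dvars (pdiff ?w g). valid_dvar n m v \<and> rk v (dvar_shift j ?w)"
  proof
    fix v assume "v \<in> dvars T \<union> dvars (pdiff ?w g)"
    then have "v \<in> dvars g \<or> (\<exists>u\<in>dvars g - {?w}. v = dvar_shift j u)" using dT dvars_pdiff by blast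
    then show "valid_dvar n m v \<and> rk v (dvar_shift j ?w)"
    proof
      assume "v \<in> dvars g" then show ?thesis using val le_s by blast
    next
      assume "\<exists>u\<in>dvars g - {?w}. v = dvar_shift j u"
      then obtain u where u: "u \<in> dvars g" "u \<noteq> ?w" "v = dvar_shift j u" by blast
      have "rk u ?w" using below u by blast
      then show ?thesis using u val vw assms(3) rkSM_9 valid_shift by blast
    qed
  qed
  then show ?thesis unfolding lin_def using eq valid_shift[OF vw assms(3)] by blast
qed

lemma lin_step:
  assumes "lin n m rk g w S" "j < m" "is_derivation (\<delta> j)"
  shows "lin n m rk (pder \<delta> j g) (dvar_shift j w) S"
proof -
  obtain T where T: "g = S * dX w + T" "\<forall>v\<in>dvars T \<union> dvars S. valid_dvar n m v \<and> rk v w"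
    and vw: "valid_dvar n m w" using assms(1) unfolding lin_def by blast
  have ws: "rk w (dvar_shift j w)" using rkS_9[OF vw assms(2)] .
  define T' where "T' = pder \<delta> j S * dX w + pder \<delta> j T"
  have eq: "pder \<delta> j g = S * dX (dvar_shift j w) + T'"
    unfolding T'_def T(1) using assms(3) by (simp add: pder_add pder_mult pder_dX algebra_simps)
  have good: "\<And>v. v \<in> dvars T \<union> dvars S \<Longrightarrow> valid_dvar n m v \<and> rk v (dvar_shift j w)"
    using T(2) ws rkT_9 by blast
  have goods: "\<And>v. v \<in> dvars T \<union> dvars S \<Longrightarrow> valid_dvar n m (dvar_shift j v) \<and> rk (dvar_shift j v) (dvar_shift j w)"
    using T(2) vw assms(2) rkSM_9 valid_shift by blast
  have "\<forall>v\<in>dvars T' \<union> dvars S. valid_dvar n m v \<and> rk v (dvar_shift j w)"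
  proof
    fix v assume v: "v \<in> dvars T' \<union> dvars S"
    have "dvars T' \<subseteq> dvars (pder \<delta> j S) \<union> {w} \<union> dvars (pder \<delta> j T)"
      unfolding T'_def using dvars_add dvars_mult[of "pder \<delta> j S" "dX w"] by fastforce
    also have "\<dots> \<subseteq> dvars S \<union> dvar_shift j ` dvars S \<union> {w} \<union> dvars T \<union> dvar_shift j ` dvars T"
      using dvars_pder[of \<delta> j S] dvars_pder[of \<delta> j T] by blast
    finally have "v \<in> dvars S \<union> dvars T \<or> v = w \<or> (\<exists>u\<in>dvars S \<union> dvars T. v = dvar_shift j u)"
      using v by blast
    then show "valid_dvar n m v \<and> rk v (dvar_shift j w)"
      using good goods vw ws by blast
  qed
  then show ?thesis unfolding lin_def using eq valid_shift[OF vw assms(2)] by blast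
qed

lemma lin_deriv_aux:
  assumes "g \<in> delta_ideal n m \<delta> L" "L \<subseteq> dpolys n m" "g \<in> dpolys n m" "\<not> is_const g"
    "\<forall>j<m. is_derivation (\<delta> j)"
  shows "ks e \<subseteq> {..<m} \<Longrightarrow> e \<noteq> 0 \<Longrightarrow> psum e = N \<Longrightarrow>
     \<exists>t. t \<in> delta_ideal n m \<delta> L \<and> lin n m rk t (fst (leader rk g), snd (leader rk g) + e) (pdiff (leader rk g) g)"
proof (induction N arbitrary: e rule: less_induct)
  case (less N)
  let ?u = "leader rk g"
  obtain j where j: "j \<in> ks e" using less.prems(2) by (metis all_not_in_conv keys_eq_empty)
  then have jm: "j < m" using less.prems(1) by auto
  define e' where "e' = e - sg j 1"
  have ee: "e = e' + sg j 1"
    using j by (intro poly_mapping_eqI) (auto simp: e'_def lookup_minus_nat lookup_plus_nat lookup_single when_def in_keys_iff)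
  have ke': "ks e' \<subseteq> ks e" by (auto simp: e'_def in_keys_iff lookup_minus_nat)
  have eq: "(fst ?u, snd ?u + e) = dvar_shift j (fst ?u, snd ?u + e')"
    by (simp add: ee dvar_shift_def add.assoc)
  show ?case
  proof (cases "e' = 0")
    case True
    have "lin n m rk (pder \<delta> j g) (dvar_shift j ?u) (pdiff ?u g)"
      using lin_first[OF assms(3,4) jm] assms(5) jm by blast
    moreover have "pder \<delta> j g \<in> delta_ideal n m \<delta> L" using assms(1) jm by (rule delta_ideal.der[rotated])
    ultimately show ?thesis using eq True by (intro exI[of _ "pder \<delta> j g"]) (simp add: dvar_shift_def)
  next
    case False
    have "psum e = sum (lk e) (ks e)" by (simp add: psum_def[OF RK])
    also have "\<dots> = sum (\<lambda>k. lk e' k + (1 when j = k)) (ks e)"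
      by (subst ee) (simp add: lookup_plus_nat lookup_single)
    also have "\<dots> = psum e' + 1"
      using j by (simp add: sum.distrib psum_super[OF RK _ ke'] when_def)
    finally have lt: "psum e' < N" using less.prems(3) by simp
    have ke'm: "ks e' \<subseteq> {..<m}" using ke' less.prems(1) by blast
    obtain t where t: "t \<in> delta_ideal n m \<delta> L" "lin n m rk t (fst ?u, snd ?u + e') (pdiff ?u g)"
      using less.IH[OF lt ke'm False refl] by blast
    have "lin n m rk (pder \<delta> j t) (dvar_shift j (fst ?u, snd ?u + e')) (pdiff ?u g)"
      using lin_step[OF t(2) jm] assms(5) jm by blast
    moreover have "pder \<delta> j t \<in> delta_ideal n m \<delta> L" using t(1) jm by (rule delta_ideal.der[rotated])
    ultimately show ?thesis using eq by (intro exI[of _ "pder \<delta> j t"]) simp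
  qed
qed

end


lemma min_exists:
  assumes "finite A" "A \<noteq> {}" "A \<subseteq> U"
    and tr: "\<forall>x\<in>U. \<forall>y\<in>U. \<forall>z\<in>U. R x y \<longrightarrow> R y z \<longrightarrow> R x z"
    and tot: "\<forall>x\<in>U. \<forall>y\<in>U. x \<noteq> y \<longrightarrow> R x y \<or> R y x"
  shows "\<exists>x\<in>A. \<forall>y\<in>A. y \<noteq> x \<longrightarrow> R x y"
  using assms(1,2,3)
proof (induction A rule: finite_ne_induct)
  case (singleton x) then show ?case by simp
next
  case (insert x F)
  have FU: "F \<subseteq> U" using insert.prems by simp
  obtain w where w: "w \<in> F" "\<forall>y\<in>F. y \<noteq> w \<longrightarrow> R w y" using insert.IH[OF FU] by blast
  have xU: "x \<in> U" and wU: "w \<in> U" using insert.prems w(1) by auto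
  have "x \<noteq> w" using insert.hyps w(1) by blast
  then have "R x w \<or> R w x" using tot xU wU by blast
  then show ?case
  proof
    assume "R x w"
    have "\<forall>y\<in>insert x F. y \<noteq> x \<longrightarrow> R x y"
    proof (intro ballI impI)
      fix y assume y: "y \<in> insert x F" "y \<noteq> x"
      then have "y \<in> F" by simp
      show "R x y"
      proof (cases "y = w")
        case True then show ?thesis using \<open>R x w\<close> by simp
      next
        case False
        then have "R w y" using w \<open>y \<in> F\<close> by blast
        moreover have "y \<in> U" using \<open>y \<in> F\<close> FU by blast
        ultimately show ?thesis using tr xU wU \<open>R x w\<close> by blast
      qed
    qed
    then show ?thesis by blast
  next
    assume "R w x"
    have "\<forall>y\<in>insert x F. y \<noteq> w \<longrightarrow> R w y" using \<open>R w x\<close> w(2) by blast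
    then show ?thesis using w(1) by blast
  qed
qed

lemma sorted_exists:
  assumes "finite U" and tr: "\<forall>x\<in>U. \<forall>y\<in>U. \<forall>z\<in>U. R x y \<longrightarrow> R y z \<longrightarrow> R x z"
    and tot: "\<forall>x\<in>U. \<forall>y\<in>U. x \<noteq> y \<longrightarrow> R x y \<or> R y x"
  shows "\<exists>xs. set xs = U \<and> sorted_wrt R xs"
  using assms(1)
proof (induction U rule: finite_remove_induct)
  case empty then show ?case by auto
next
  case (remove A)
  obtain x where x: "x \<in> A" "\<forall>y\<in>A. y \<noteq> x \<longrightarrow> R x y"
    using min_exists[of A U R] remove.hyps tr tot by blast
  obtain xs where xs: "set xs = A - {x}" "sorted_wrt R xs" using remove.IH[OF x(1)] by blast
  have "set (x # xs) = A" using xs x by auto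
  moreover have "sorted_wrt R (x # xs)" using xs x by auto
  ultimately show ?case by blast
qed

context
  fixes n m :: nat and rk :: "dvar \<Rightarrow> dvar \<Rightarrow> bool"
  assumes RK: "is_ranking n m rk"
begin

lemmas rkT_10 = rk_trans[OF RK] and rkI_10 = rk_irrefl[OF RK] and rkA_10 = rk_asym[OF RK]
  and rkTot_10 = rk_total[OF RK]

definition "NC f \<longleftrightarrow> f \<in> dpolys n m \<and> \<not> is_const f"

lemma NC_leader: "NC f \<Longrightarrow> leader rk f \<in> dvars f"
  unfolding NC_def using leader_props(1)[OF RK] by blast
lemma NC_below: "NC f \<Longrightarrow> v \<in> dvars f \<Longrightarrow> v = leader rk f \<or> rk v (leader rk f)"
  unfolding NC_def using leader_props(2)[OF RK] by blast
lemma NC_valid: "NC f \<Longrightarrow> valid_dvar n m (leader rk f)"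
  unfolding NC_def using leader_valid[OF RK] by blast
lemma NC_deg: "NC f \<Longrightarrow> 1 \<le> degree_in (leader rk f) f"
  using NC_leader degree_in_pos by blast

lemma rank_irrefl: "\<not> rank_less rk f f"
  unfolding rank_less_def using rkI_10 by auto

lemma rank_trans: "rank_less rk f g \<Longrightarrow> rank_less rk g h \<Longrightarrow> rank_less rk f h"
  unfolding rank_less_def using rkT_10[of "leader rk f" "leader rk g" "leader rk h"] by auto

lemma rank_tri: "NC f \<Longrightarrow> NC g \<Longrightarrow> rank_less rk f g \<or> same_rank rk f g \<or> rank_less rk g f"
  unfolding rank_less_def same_rank_def using rkTot_10[OF NC_valid NC_valid] by (metis nat_neq_iff)

lemma same_not_less: "same_rank rk f g \<Longrightarrow> \<not> rank_less rk f g"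
  unfolding rank_less_def same_rank_def using rkI_10 by auto

lemma same_not_less': "same_rank rk f g \<Longrightarrow> \<not> rank_less rk g f"
  unfolding rank_less_def same_rank_def using rkI_10 by auto

lemma reduced_not_same: "reduced rk f g \<Longrightarrow> \<not> same_rank rk f g"
  unfolding reduced_def same_rank_def by auto

lemma same_rank_refl: "same_rank rk f f" by (simp add: same_rank_def)

lemma reduced_of_less:
  assumes "NC f" "NC r" "rank_less rk f r"
  shows "reduced rk f r"
proof -
  let ?u = "leader rk f" and ?w = "leader rk r"
  have uw: "?u = ?w \<or> rk ?u ?w" using assms(3) unfolding rank_less_def by auto
  have pr: "partially_reduced rk f r"
    unfolding partially_reduced_def
  proof
    fix v assume v: "v \<in> dvars f"
    show "\<not> proper_derivative v ?w"
    proof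
      assume pd: "proper_derivative v ?w"
      have vv: "valid_dvar n m v" using v assms(1) by (auto simp: NC_def dpolys_iff)
      have "rk ?w v" using rk_proper[OF RK NC_valid[OF assms(2)] vv pd] .
      moreover have "v = ?u \<or> rk v ?u" using NC_below[OF assms(1) v] .
      ultimately have "v = ?w \<or> rk v ?w" using uw rkT_10[of v ?u ?w] by auto
      then show False using \<open>rk ?w v\<close> rkI_10[of ?w] rkT_10[of ?w v ?w] by auto
    qed
  qed
  have "degree_in ?w f < degree_in ?w r"
  proof (cases "?u = ?w")
    case True then show ?thesis using assms(3) unfolding rank_less_def by (auto simp: rkI_10)
  next
    case False
    then have "rk ?u ?w" using uw by simp
    have "?w \<notin> dvars f"
    proof
      assume "?w \<in> dvars f"
      then have "?w = ?u \<or> rk ?w ?u" using NC_below[OF assms(1)] by blast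
      then show False using \<open>rk ?u ?w\<close> False rkA_10[of ?u ?w] by auto
    qed
    then have "degree_in ?w f = 0" by (rule degree_in_notin)
    then show ?thesis using NC_deg[OF assms(2)] by simp
  qed
  then show ?thesis using pr by (simp add: reduced_def)
qed

lemma minimality:
  assumes CS: "characteristic_set rk L P" and LP: "P \<subseteq> dpolys n m"
    and r: "r \<in> P" "NC r" "\<forall>f\<in>L. reduced rk r f"
  shows False
proof -
  have AR: "autoreduced rk L" and LsP: "L \<subseteq> P" and min: "\<not> (\<exists>B. autoreduced rk B \<and> B \<subseteq> P \<and> aut_lower rk B L)"
    using CS unfolding characteristic_set_def by auto
  have NCL: "\<And>f. f \<in> L \<Longrightarrow> NC f" using AR LsP LP unfolding autoreduced_def NC_def by blast
  have finL: "finite L" using AR by (simp add: autoreduced_def)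
  obtain xs where xs: "set xs = L" "sorted_wrt (rank_less rk) xs"
  proof -
    have tot: "\<And>x y. x \<in> L \<Longrightarrow> y \<in> L \<Longrightarrow> x \<noteq> y \<Longrightarrow> rank_less rk x y \<or> rank_less rk y x"
    proof -
      fix x y assume "x \<in> L" "y \<in> L" "x \<noteq> y"
      then have "reduced rk x y" using AR by (simp add: autoreduced_def)
      then have "\<not> same_rank rk x y" by (rule reduced_not_same)
      then show "rank_less rk x y \<or> rank_less rk y x" using rank_tri NCL \<open>x \<in> L\<close> \<open>y \<in> L\<close> by blast
    qed
    have tr: "\<forall>x\<in>L. \<forall>y\<in>L. \<forall>z\<in>L. rank_less rk x y \<longrightarrow> rank_less rk y z \<longrightarrow> rank_less rk x z"
      using rank_trans by blast
    have tot': "\<forall>x\<in>L. \<forall>y\<in>L. x \<noteq> y \<longrightarrow> rank_less rk x y \<or> rank_less rk y x"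
      using tot by blast
    obtain ys where "set ys = L" "sorted_wrt (rank_less rk) ys"
      using sorted_exists[of L "rank_less rk"] finL tr tot' by blast
    then show ?thesis by (rule that)
  qed
  define P' where "P' = (\<lambda>g. rank_less rk g r)"
  define k where "k = length (takeWhile P' xs)"
  define as where "as = take k xs @ [r]"
  define B where "B = set (take k xs) \<union> {r}"
  have tw: "take k xs = takeWhile P' xs" unfolding k_def by (metis takeWhile_eq_take)
  have less_r: "\<And>g. g \<in> set (take k xs) \<Longrightarrow> rank_less rk g r"
    unfolding tw P'_def by (meson set_takeWhileD)
  have BsubL: "set (take k xs) \<subseteq> L" using xs(1) by (meson set_take_subset)
  have sa: "sorted_wrt (rank_less rk) as"
    unfolding as_def using xs(2) less_r by (auto simp: sorted_wrt_append sorted_wrt_take)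
  have klen: "k \<le> length xs" unfolding k_def by (rule length_takeWhile_le)
  have nth_as: "\<And>i. i < k \<Longrightarrow> as ! i = xs ! i" unfolding as_def using klen by (simp add: nth_append)
  have lower: "aut_lower rk B L"
    unfolding aut_lower_def
  proof (rule exI[of _ as], rule exI[of _ xs], intro conjI)
    show "set as = B" by (simp add: as_def B_def)
    show "set xs = L" by (rule xs(1))
    show "sorted_wrt (rank_less rk) as" by (rule sa)
    show "sorted_wrt (rank_less rk) xs" by (rule xs(2))
    show "(\<exists>k<min (length as) (length xs). (\<forall>i<k. same_rank rk (as ! i) (xs ! i)) \<and> rank_less rk (as ! k) (xs ! k)) \<or>
          (length xs < length as \<and> (\<forall>i<length xs. same_rank rk (as ! i) (xs ! i)))"
    proof (cases "k < length xs")
      case True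
      have "\<not> P' (xs ! k)" unfolding k_def using True k_def by (metis nth_length_takeWhile)
      then have nl: "\<not> rank_less rk (xs ! k) r" by (simp add: P'_def)
      have xk: "xs ! k \<in> L" using True xs(1) by auto
      have "\<not> same_rank rk r (xs ! k)" using r(3) xk reduced_not_same by blast
      then have "rank_less rk r (xs ! k)" using rank_tri[OF r(2) NCL[OF xk]] nl by blast
      moreover have "as ! k = r" unfolding as_def using klen True by (simp add: nth_append)
      moreover have "k < min (length as) (length xs)" using True klen by (simp add: as_def)
      ultimately show ?thesis using nth_as same_rank_refl by (intro disjI1 exI[of _ k]) auto
    next
      case False
      then have "k = length xs" using klen by simp
      then show ?thesis using nth_as same_rank_refl by (intro disjI2) (auto simp: as_def)
    qed
  qed
  have "autoreduced rk B"
    unfolding autoreduced_def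
  proof (intro conjI ballI impI)
    show "finite B" by (simp add: B_def)
  next
    fix f assume "f \<in> B"
    then show "\<not> is_const f" using NCL BsubL r(2) by (auto simp: B_def NC_def)
  next
    fix f g assume fg: "f \<in> B" "g \<in> B" "f \<noteq> g"
    show "reduced rk f g"
    proof (cases "f = r")
      case True
      then have "g \<in> L" using fg BsubL by (auto simp: B_def)
      then show ?thesis using r(3) True by blast
    next
      case False
      then have f: "f \<in> set (take k xs)" using fg(1) by (simp add: B_def)
      show ?thesis
      proof (cases "g = r")
        case True
        then show ?thesis using reduced_of_less[OF NCL r(2) less_r[OF f]] f BsubL by blast
      next
        case False
        then have "g \<in> L" using fg(2) BsubL by (auto simp: B_def)
        then show ?thesis using AR fg(3) f BsubL by (auto simp: autoreduced_def)
      qed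
    qed
  qed
  moreover have "B \<subseteq> P" using BsubL LsP r(1) by (auto simp: B_def)
  ultimately show False using min lower by blast
qed

end


lemma lookup_sum_single_at:
  assumes "finite A" "\<mu> \<in> A" "\<And>\<nu>. \<nu> \<in> A \<Longrightarrow> \<nu> \<noteq> \<mu> \<Longrightarrow> g \<nu> = g \<mu> \<Longrightarrow> c \<nu> = 0"
  shows "lk (\<Sum>\<nu>\<in>A. sg (g \<nu>) (c \<nu>)) (g \<mu>) = c \<mu>"
proof -
  have "lk (\<Sum>\<nu>\<in>A. sg (g \<nu>) (c \<nu>)) (g \<mu>) = (\<Sum>\<nu>\<in>A. (c \<nu> when g \<nu> = g \<mu>))"
    by (simp add: lookup_sum lookup_single)
  also have "\<dots> = (c \<mu> when g \<mu> = g \<mu>) + (\<Sum>\<nu>\<in>A - {\<mu>}. (c \<nu> when g \<nu> = g \<mu>))"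
    using assms(1,2) by (simp add: sum.remove)
  also have "(\<Sum>\<nu>\<in>A - {\<mu>}. (c \<nu> when g \<nu> = g \<mu>)) = 0"
    using assms(3) by (intro sum.neutral) (auto simp: when_def)
  finally show ?thesis by simp
qed

lemma minus_single_inj:
  "k \<le> lk \<nu> u \<Longrightarrow> k \<le> lk \<mu> u \<Longrightarrow> \<nu> - sg u k = \<mu> - sg u (k::nat) \<Longrightarrow> \<nu> = \<mu>"
proof (intro poly_mapping_eqI)
  fix x assume a: "k \<le> lk \<nu> u" "k \<le> lk \<mu> u" "\<nu> - sg u k = \<mu> - sg u k"
  have "lk (\<nu> - sg u k) x = lk (\<mu> - sg u k) x" using a(3) by simp
  then show "lk \<nu> x = lk \<mu> x" using a(1,2) by (cases "x = u") (auto simp: lookup_minus_nat lookup_single)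
qed

lemma degree_in_attained:
  assumes "f \<noteq> 0"
  shows "\<exists>\<mu>\<in>ks f. lk \<mu> v = degree_in v f"
proof -
  have "ks f \<noteq> {}" using assms by simp
  then have "Max ((\<lambda>\<mu>. lk \<mu> v) ` ks f) \<in> (\<lambda>\<mu>. lk \<mu> v) ` ks f" by (intro Max_in) auto
  then show ?thesis using assms unfolding degree_in_def by (simp add: image_iff) (metis)
qed

lemma coeff_in_nonzero:
  assumes "f \<noteq> 0"
  shows "coeff_in v (degree_in v f) (f :: 'a::field dpoly) \<noteq> 0"
proof -
  let ?d = "degree_in v f"
  obtain \<mu> where \<mu>: "\<mu> \<in> ks f" "lk \<mu> v = ?d" using degree_in_attained[OF assms] by blast
  let ?A = "{\<mu>\<in>ks f. lk \<mu> v = ?d}"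
  have "lk (coeff_in v ?d f) (\<mu> - sg v ?d) = lk f \<mu>"
    unfolding coeff_in_def
  proof (rule lookup_sum_single_at[where g="\<lambda>\<mu>. \<mu> - sg v ?d" and c="lk f"])
    fix \<nu> assume "\<nu> \<in> ?A" "\<nu> \<noteq> \<mu>" "\<nu> - sg v ?d = \<mu> - sg v ?d"
    then show "lk f \<nu> = 0" using minus_single_inj[of ?d \<nu> v \<mu>] \<mu>(2) by auto
  qed (use \<mu> in auto)
  then show ?thesis using \<mu>(1) by (auto simp: in_keys_iff)
qed

lemma pdiff_nonzero:
  assumes "v \<in> dvars f"
  shows "pdiff v (f :: 'a::field_char_0 dpoly) \<noteq> 0"
proof -
  have f0: "f \<noteq> 0" using assms by auto
  let ?d = "degree_in v f"
  have d1: "1 \<le> ?d" using degree_in_pos[OF assms] .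
  obtain \<mu> where \<mu>: "\<mu> \<in> ks f" "lk \<mu> v = ?d" using degree_in_attained[OF f0] by blast
  have "lk (pdiff v f) (\<mu> - sg v 1) = lk f \<mu> * of_nat (lk \<mu> v)"
    unfolding pdiff_def
  proof (rule lookup_sum_single_at[where g="\<lambda>\<mu>. \<mu> - sg v 1" and c="\<lambda>\<mu>. lk f \<mu> * of_nat (lk \<mu> v)"])
    fix \<nu> assume "\<nu> \<in> ks f" "\<nu> \<noteq> \<mu>" "\<nu> - sg v 1 = \<mu> - sg v 1"
    then show "lk f \<nu> * of_nat (lk \<nu> v) = 0" using minus_single_inj[of 1 \<nu> v \<mu>] \<mu>(2) d1
      by (cases "lk \<nu> v = 0") auto
  qed (use \<mu> in auto)
  moreover have "lk f \<mu> * of_nat (lk \<mu> v) \<noteq> 0" using \<mu> d1 by (auto simp: in_keys_iff)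
  ultimately show ?thesis by auto
qed

lemma dvars_separant: "dvars (separant rk f) \<subseteq> dvars f"
  by (simp add: separant_def dvars_pdiff)

lemma dvars_initial: "dvars (initial rk f) \<subseteq> dvars f - {leader rk f}"
  by (simp add: initial_def dvars_coeff_in)

lemma deg_le_bnd: "degree_in v h \<le> degree_in v f \<longleftrightarrow> bnd v (degree_in v f) h"
  by (rule degree_in_le)

lemma deg_initial: "degree_in v (initial rk f) \<le> degree_in v f"
  unfolding degree_in_le initial_def by (rule bnd_coeff_in) (rule bnd_degree_in)

lemma deg_separant: "degree_in v (separant rk f) \<le> degree_in v f"
  unfolding degree_in_le separant_def by (rule bnd_pdiff) (rule bnd_degree_in)

lemma deg_separant_self:
  "degree_in (leader rk f) (separant rk f) \<le> degree_in (leader rk f) f - 1"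
  unfolding degree_in_le separant_def by (rule bnd_pdiff_self) (rule bnd_degree_in)


lemma prime_prop:
  assumes "prime_delta_ideal n m \<delta> P"
  shows "\<forall>f\<in>dpolys n m. \<forall>g\<in>dpolys n m. f * g \<in> P \<longrightarrow> f \<in> P \<or> g \<in> P"
  using assms unfolding prime_delta_ideal_def by (elim conjE) assumption

lemma prime_mult_notin:
  assumes "prime_delta_ideal n m \<delta> P" "f \<in> dpolys n m" "g \<in> dpolys n m" "f \<notin> P" "g \<notin> P"
  shows "f * g \<notin> P"
  using prime_prop[OF assms(1)] assms(2-5) by blast

context
  fixes n m :: nat and \<delta> :: "nat \<Rightarrow> 'a::field_char_0 \<Rightarrow> 'a" and D :: "'a \<Rightarrow> 'a"
    and rk :: "dvar \<Rightarrow> dvar \<Rightarrow> bool" and P L :: "'a dpoly set"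
  assumes CD: "commuting_derivations m \<delta> D" and RK: "is_ranking n m rk"
    and PR: "prime_delta_ideal n m \<delta> P" and CS: "characteristic_set rk L P"
begin

abbreviation "HH \<equiv> H_of rk L"

lemma PD: "P \<subseteq> dpolys n m" using PR by (simp add: prime_delta_ideal_def)
lemma LP: "L \<subseteq> P" using CS by (simp add: characteristic_set_def)
lemma AR: "autoreduced rk L" using CS by (simp add: characteristic_set_def)
lemma finL: "finite L" using AR by (simp add: autoreduced_def)
lemma LD: "L \<subseteq> dpolys n m" using LP PD by blast
lemma NCL: "f \<in> L \<Longrightarrow> NC n m f"
  using NC_def[OF RK] LD AR by (auto simp: autoreduced_def)
lemma derivs: "\<forall>j<m. is_derivation (\<delta> j)" using CD by (simp add: commuting_derivations_def)
lemma IdP: "h \<in> delta_ideal n m \<delta> L \<Longrightarrow> h \<in> P" using delta_ideal_sub_prime[OF PR LP] .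
lemma IdD: "h \<in> delta_ideal n m \<delta> L \<Longrightarrow> h \<in> dpolys n m" using delta_ideal_dpolys[OF LD] .

lemmas rkT_12 = rk_trans[OF RK] and rkI_12 = rk_irrefl[OF RK] and rkA_12 = rk_asym[OF RK]

lemma red: "f \<in> L \<Longrightarrow> g \<in> L \<Longrightarrow> f \<noteq> g \<Longrightarrow> reduced rk f g"
  using AR by (simp add: autoreduced_def)

lemma leaders_distinct: "f \<in> L \<Longrightarrow> g \<in> L \<Longrightarrow> leader rk f = leader rk g \<Longrightarrow> f = g"
proof (rule ccontr)
  assume a: "f \<in> L" "g \<in> L" "leader rk f = leader rk g" "f \<noteq> g"
  then have "degree_in (leader rk g) f < degree_in (leader rk g) g"
    "degree_in (leader rk f) g < degree_in (leader rk f) f"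
    using red[of f g] red[of g f] by (auto simp: reduced_def)
  then show False using a(3) by simp
qed

lemma leader_not_proper: "f \<in> L \<Longrightarrow> g \<in> L \<Longrightarrow> \<not> proper_derivative (leader rk f) (leader rk g)"
proof
  assume a: "f \<in> L" "g \<in> L" "proper_derivative (leader rk f) (leader rk g)"
  show False
  proof (cases "f = g")
    case True then show False using a(3) by (simp add: proper_derivative_def)
  next
    case False
    then have "partially_reduced rk f g" using red a by (simp add: reduced_def)
    then show False using a(3) NC_leader[OF RK NCL[OF a(1)]] by (auto simp: partially_reduced_def)
  qed
qed

lemma in_L_valid: "f \<in> L \<Longrightarrow> v \<in> dvars f \<Longrightarrow> valid_dvar n m v"
  using LD by (auto simp: dpolys_iff)

lemma IS_d: "f \<in> L \<Longrightarrow> initial rk f \<in> dpolys n m \<and> separant rk f \<in> dpolys n m"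
proof
  assume f: "f \<in> L"
  then have fd: "f \<in> dpolys n m" using LD by blast
  have "dvars (initial rk f) \<subseteq> dvars f" using dvars_initial by blast
  then show "initial rk f \<in> dpolys n m" using dpolys_sub fd by blast
  show "separant rk f \<in> dpolys n m" using dpolys_sub[OF dvars_separant fd] .
qed

lemma HH_dpolys: "HH \<in> dpolys n m"
proof -
  have "\<And>f. f \<in> L \<Longrightarrow> initial rk f * separant rk f \<in> dpolys n m"
  proof -
    fix f assume f: "f \<in> L"
    have "initial rk f \<in> dpolys n m" using dpolys_sub[OF _ LD[THEN subsetD, OF f]] dvars_initial by blast
    moreover have "separant rk f \<in> dpolys n m" using dpolys_sub[OF _ LD[THEN subsetD, OF f]] dvars_separant by blast
    ultimately show "initial rk f * separant rk f \<in> dpolys n m" by (rule dpolys_mult)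
  qed
  then show ?thesis unfolding H_of_def by (rule dpolys_prod)
qed

lemma HH_factor_I: "f \<in> L \<Longrightarrow> \<exists>J \<in> dpolys n m. HH = initial rk f * J"
proof -
  assume f: "f \<in> L"
  have D: "\<And>g. g \<in> L \<Longrightarrow> initial rk g \<in> dpolys n m \<and> separant rk g \<in> dpolys n m"
    by (rule IS_d)
  have "HH = (initial rk f * separant rk f) * (\<Prod>g\<in>L - {f}. initial rk g * separant rk g)"
    unfolding H_of_def using f finL by (simp add: prod.remove)
  then have "HH = initial rk f * (separant rk f * (\<Prod>g\<in>L - {f}. initial rk g * separant rk g))"
    by (simp add: mult.assoc)
  moreover have "separant rk f * (\<Prod>g\<in>L - {f}. initial rk g * separant rk g) \<in> dpolys n m"
    using D f by (intro dpolys_mult dpolys_prod) auto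
  ultimately show ?thesis by blast
qed

lemma HH_factor_S: "f \<in> L \<Longrightarrow> \<exists>J \<in> dpolys n m. HH = separant rk f * J"
proof -
  assume f: "f \<in> L"
  have D: "\<And>g. g \<in> L \<Longrightarrow> initial rk g \<in> dpolys n m \<and> separant rk g \<in> dpolys n m"
    by (rule IS_d)
  have "HH = (initial rk f * separant rk f) * (\<Prod>g\<in>L - {f}. initial rk g * separant rk g)"
    unfolding H_of_def using f finL by (simp add: prod.remove)
  then have "HH = separant rk f * (initial rk f * (\<Prod>g\<in>L - {f}. initial rk g * separant rk g))"
    by (simp add: mult_ac)
  moreover have "initial rk f * (\<Prod>g\<in>L - {f}. initial rk g * separant rk g) \<in> dpolys n m"
    using D f by (intro dpolys_mult dpolys_prod) auto
  ultimately show ?thesis by blast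
qed

definition bad :: "'a dpoly \<Rightarrow> dvar \<Rightarrow> bool" where
  "bad g v \<longleftrightarrow> v \<in> dvars g \<and> (\<exists>f\<in>L. proper_derivative v (leader rk f) \<or>
      (v = leader rk f \<and> degree_in v f \<le> degree_in v g))"

lemma base:
  assumes "g \<in> P" "\<And>v. \<not> bad g v"
  shows "g = 0"
proof (cases "is_const g")
  case True
  then have "g = sg 0 (lk g 0)" using dvars_empty_const by (simp add: is_const_def)
  then have "lk g 0 = 0" using prime_const_zero[OF PR] assms(1) by metis
  then show ?thesis using \<open>g = sg 0 (lk g 0)\<close> by simp
next
  case False
  have gd: "g \<in> dpolys n m" using assms(1) PD by blast
  have "\<forall>f\<in>L. reduced rk g f"
  proof
    fix f assume f: "f \<in> L"
    have "partially_reduced rk g f"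
      unfolding partially_reduced_def using assms(2) f by (auto simp: bad_def)
    moreover have "degree_in (leader rk f) g < degree_in (leader rk f) f"
    proof (cases "leader rk f \<in> dvars g")
      case True then show ?thesis using assms(2)[of "leader rk f"] f by (auto simp: bad_def)
    next
      case False then show ?thesis using degree_in_notin[OF False] NC_deg[OF RK NCL[OF f]] by simp
    qed
    ultimately show "reduced rk g f" by (simp add: reduced_def)
  qed
  then show ?thesis using minimality[OF RK CS PD assms(1)] NC_def[OF RK] gd False by blast
qed

lemma nobad:
  assumes f: "f \<in> L" and h: "dvars h \<subseteq> dvars f" "\<And>v. degree_in v h \<le> degree_in v f"
    "degree_in (leader rk f) h < degree_in (leader rk f) f"
  shows "\<not> bad h v"
proof
  assume "bad h v"
  then obtain f' where v: "v \<in> dvars h" "f' \<in> L"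
    "proper_derivative v (leader rk f') \<or> (v = leader rk f' \<and> degree_in v f' \<le> degree_in v h)"
    by (auto simp: bad_def)
  have vf: "v \<in> dvars f" using v(1) h(1) by blast
  show False
  proof (cases "f' = f")
    case True
    note T = True
    show False
    proof (cases "proper_derivative v (leader rk f)")
      case True
      have "rk (leader rk f) v" using rk_proper[OF RK NC_valid[OF RK NCL[OF f]] in_L_valid[OF f vf] True] .
      moreover have "v = leader rk f \<or> rk v (leader rk f)" using NC_below[OF RK NCL[OF f] vf] .
      ultimately show False using rkI_12[of "leader rk f"] rkT_12[of "leader rk f" v "leader rk f"] by auto
    next
      case False
      then have "v = leader rk f" "degree_in v f \<le> degree_in v h" using v(3) T by auto
      then show False using h(3) by simp
    qed
  next
    case False
    then have "reduced rk f f'" using red f v(2) by blast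
    then have pr: "\<not> proper_derivative v (leader rk f')" "degree_in (leader rk f') f < degree_in (leader rk f') f'"
      using vf by (auto simp: reduced_def partially_reduced_def)
    then have "v = leader rk f'" "degree_in v f' \<le> degree_in v h" using v(3) by auto
    then show False using pr(2) h(2)[of v] by simp
  qed
qed

lemma HH_notin: "HH \<notin> P"
proof -
  have "\<And>f. f \<in> L \<Longrightarrow> initial rk f * separant rk f \<notin> P"
  proof -
    fix f assume f: "f \<in> L"
    have fd: "f \<in> dpolys n m" using LD f by blast
    have Id: "initial rk f \<in> dpolys n m" using dpolys_sub[OF _ fd] dvars_initial by blast
    have Sd: "separant rk f \<in> dpolys n m" using dpolys_sub[OF _ fd] dvars_separant by blast
    have nz: "initial rk f \<noteq> 0" "separant rk f \<noteq> 0"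
    proof -
      have "f \<noteq> 0" using NCL[OF f] by (auto simp: NC_def[OF RK] is_const_def)
      then show "initial rk f \<noteq> 0" unfolding initial_def by (rule coeff_in_nonzero)
      show "separant rk f \<noteq> 0" unfolding separant_def by (rule pdiff_nonzero) (rule NC_leader[OF RK NCL[OF f]])
    qed
    have "leader rk f \<notin> dvars (initial rk f)" using dvars_initial by blast
    then have "degree_in (leader rk f) (initial rk f) = 0" by (rule degree_in_notin)
    then have lt: "degree_in (leader rk f) (initial rk f) < degree_in (leader rk f) f"
      using NC_deg[OF RK NCL[OF f]] by simp
    have I1: "\<not> bad (initial rk f) v" for v
    proof (rule nobad[OF f])
      show "dvars (initial rk f) \<subseteq> dvars f" using dvars_initial by blast
      show "\<And>v. degree_in v (initial rk f) \<le> degree_in v f" by (rule deg_initial)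
    qed (rule lt)
    have lt2: "degree_in (leader rk f) (separant rk f) < degree_in (leader rk f) f"
      using deg_separant_self[of rk f] NC_deg[OF RK NCL[OF f]] by linarith
    have S1: "\<not> bad (separant rk f) v" for v
    proof (rule nobad[OF f])
      show "dvars (separant rk f) \<subseteq> dvars f" by (rule dvars_separant)
      show "\<And>v. degree_in v (separant rk f) \<le> degree_in v f" by (rule deg_separant)
    qed (rule lt2)
    have "initial rk f \<notin> P"
    proof
      assume "initial rk f \<in> P"
      then have "initial rk f = 0" using base I1 by blast
      then show False using nz(1) by simp
    qed
    moreover have "separant rk f \<notin> P"
    proof
      assume "separant rk f \<in> P"
      then have "separant rk f = 0" using base S1 by blast
      then show False using nz(2) by simp
    qed
    ultimately show "initial rk f * separant rk f \<notin> P"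
      using prime_mult_notin[OF PR Id Sd] by blast
  qed
  moreover have "\<And>f. f \<in> L \<Longrightarrow> initial rk f * separant rk f \<in> dpolys n m"
    using IS_d dpolys_mult by blast
  ultimately show ?thesis unfolding H_of_def by (rule prime_prod_notin[OF PR finL, rotated])
qed

lemma bad_transfer:
  assumes "bad r v" "v \<in> dvars g" "bnd v (degree_in v g) g \<Longrightarrow> bnd v (degree_in v g) r"
  shows "bad g v"
proof -
  have "degree_in v r \<le> degree_in v g" using assms(3) bnd_degree_in degree_in_le by blast
  then show ?thesis using assms(1,2) unfolding bad_def by (meson le_trans)
qed

lemma r_in_P:
  assumes "I \<in> dpolys n m" "g \<in> P" "q \<in> dpolys n m" "t \<in> delta_ideal n m \<delta> L" "I ^ k * g = q * t + r"
  shows "r \<in> P"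
proof -
  have "I ^ k * g \<in> P" using prime_mult[OF PR dpolys_power[OF assms(1)] assms(2)] .
  moreover have "q * t \<in> P" using prime_mult[OF PR assms(3) IdP[OF assms(4)]] .
  ultimately have "I ^ k * g - q * t \<in> P" by (rule prime_diff[OF PR])
  moreover have "r = I ^ k * g - q * t" using assms(5) by simp
  ultimately show ?thesis by simp
qed

lemma finish:
  assumes "J \<in> dpolys n m" "HH = I * J" "q \<in> dpolys n m" "t \<in> delta_ideal n m \<delta> L"
    "I ^ k * g = q * t + r" "HH ^ l * r \<in> delta_ideal n m \<delta> L"
  shows "\<exists>l'. HH ^ l' * g \<in> delta_ideal n m \<delta> L"
proof -
  have "(HH ^ l * q) * t \<in> delta_ideal n m \<delta> L"
    using assms(4) by (rule delta_ideal.mult[rotated]) (intro dpolys_mult dpolys_power HH_dpolys assms(3))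
  then have "(HH ^ l * q) * t + HH ^ l * r \<in> delta_ideal n m \<delta> L"
    using assms(6) by (rule delta_ideal.add)
  moreover have "(HH ^ l * q) * t + HH ^ l * r = HH ^ l * (I ^ k * g)"
    using assms(5) by (simp add: algebra_simps)
  ultimately have A: "HH ^ l * (I ^ k * g) \<in> delta_ideal n m \<delta> L" by simp
  have "J ^ k * (HH ^ l * (I ^ k * g)) \<in> delta_ideal n m \<delta> L"
    by (rule delta_ideal.mult[OF dpolys_power[OF assms(1)] A])
  moreover have "J ^ k * (HH ^ l * (I ^ k * g)) = HH ^ (l + k) * g"
    using assms(2) by (simp add: power_add power_mult_distrib algebra_simps)
  ultimately show ?thesis by auto
qed

lemma ritt_aux:
  "valid_dvar n m w \<longrightarrow> (\<forall>g\<in>P. (\<forall>v. bad g v \<longrightarrow> v = w \<or> rk v w) \<longrightarrow> (\<exists>l. HH ^ l * g \<in> delta_ideal n m \<delta> L))"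
proof (induction w rule: wf_induct[OF wf_RR[OF RK]])
  case (1 w)
  show ?case
  proof (intro impI ballI)
    assume vw: "valid_dvar n m w"
    have lower: "\<exists>l. HH ^ l * h \<in> delta_ideal n m \<delta> L" if h: "h \<in> P" "\<forall>v. bad h v \<longrightarrow> rk v w" for h
    proof (cases "\<exists>v. bad h v")
      case False
      then have "h = 0" using base h(1) by blast
      then show ?thesis by (intro exI[of _ 0]) (simp add: delta_ideal.zero)
    next
      case True
      have hd: "h \<in> dpolys n m" using h(1) PD by blast
      have fin: "finite {v. bad h v}" by (rule finite_subset[of _ "dvars h"]) (auto simp: bad_def)
      have val: "\<forall>v\<in>{v. bad h v}. valid_dvar n m v" using hd by (auto simp: bad_def dpolys_iff)
      obtain w' where w': "w' \<in> {v. bad h v}" "\<forall>v\<in>{v. bad h v}. v \<noteq> w' \<longrightarrow> rk v w'"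
        using max_exists[OF RK fin _ val] True by blast
      have vw': "valid_dvar n m w'" using val w'(1) by blast
      have "bad h w'" using w'(1) by simp
      then have "rk w' w" using h(2) by blast
      then have "(w', w) \<in> RR n m rk" using RR_def[OF RK] vw vw' by simp
      then have "valid_dvar n m w' \<longrightarrow> (\<forall>g\<in>P. (\<forall>v. bad g v \<longrightarrow> v = w' \<or> rk v w') \<longrightarrow> (\<exists>l. HH ^ l * g \<in> delta_ideal n m \<delta> L))"
        using 1 by blast
      then show ?thesis using vw' h(1) w'(2) by blast
    qed
    fix g assume g: "g \<in> P" and bw: "\<forall>v. bad g v \<longrightarrow> v = w \<or> rk v w"
    have gd: "g \<in> dpolys n m" using g PD by blast
    show "\<exists>l. HH ^ l * g \<in> delta_ideal n m \<delta> L"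
    proof (cases "bad g w")
      case False
      then have "\<forall>v. bad g v \<longrightarrow> rk v w" using bw by blast
      then show ?thesis using lower g by blast
    next
      case True
      then obtain f where f: "f \<in> L" and wg: "w \<in> dvars g"
        and cases: "proper_derivative w (leader rk f) \<or> (w = leader rk f \<and> degree_in w f \<le> degree_in w g)"
        by (auto simp: bad_def)
      have fd: "f \<in> dpolys n m" using LD f by blast
      have NCf: "NC n m f" using NCL[OF f] .
      have fnc: "\<not> is_const f" using NCf NC_def[OF RK] by blast
      let ?u = "leader rk f"
      show ?thesis
      proof (cases "proper_derivative w ?u")
        case True
        define e where "e = snd w - snd ?u"
        have le: "\<forall>j. lk (snd ?u) j \<le> lk (snd w) j" using True by (simp add: proper_derivative_def)
        have sw: "snd w = snd ?u + e"
          using le by (intro poly_mapping_eqI) (simp add: e_def lookup_minus_nat lookup_plus_nat)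
        have e0: "e \<noteq> 0" using sw True by (auto simp: proper_derivative_def)
        have ke: "ks e \<subseteq> {..<m}"
        proof
          fix x assume "x \<in> ks e"
          then have "x \<in> ks (snd w)" by (auto simp: e_def in_keys_iff lookup_minus_nat)
          then show "x \<in> {..<m}" using vw by (auto simp: valid_dvar_def)
        qed
        have weq: "w = (fst ?u, snd ?u + e)" using sw True by (simp add: proper_derivative_def prod_eq_iff)
        obtain t where t: "t \<in> delta_ideal n m \<delta> L" "lin n m rk t w (separant rk f)"
          using lin_deriv_aux[OF RK delta_ideal.gen[OF f] LD fd fnc derivs ke e0 refl] weq
          by (auto simp: separant_def)
        then obtain T where T: "t = separant rk f * dX w + T"
          "\<forall>v\<in>dvars T \<union> dvars (separant rk f). valid_dvar n m v \<and> rk v w"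
          unfolding lin_def by blast
        let ?S = "separant rk f"
        have wS: "w \<notin> dvars ?S" using T(2) rkI_12 by blast
        have wT: "w \<notin> dvars T" using T(2) rkI_12 by blast
        have Sd: "?S \<in> dpolys n m" using IS_d[OF f] by blast
        obtain k q r where kqr: "?S ^ k * g = q * t + r" "bnd w (1 - 1) r"
          "dvars r \<subseteq> dvars g \<union> dvars ?S \<union> dvars T \<union> {w}"
          "dvars q \<subseteq> dvars g \<union> dvars ?S \<union> dvars T \<union> {w}"
          "\<forall>v M. v \<noteq> w \<longrightarrow> v \<notin> dvars ?S \<longrightarrow> v \<notin> dvars T \<longrightarrow> bnd v M g \<longrightarrow> bnd v M r"
          using pseudo_div[of t ?S w 1 T "degree_in w g" g] T(1) wS bnd_notin[OF wT] bnd_degree_in[of w g]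
          by auto
        have qd: "q \<in> dpolys n m"
          unfolding dpolys_iff
        proof
          fix v assume "v \<in> dvars q"
          then have "v \<in> dvars g \<or> v \<in> dvars ?S \<union> dvars T \<or> v = w" using kqr(4) by blast
          then show "valid_dvar n m v" using gd T(2) vw by (auto simp: dpolys_iff)
        qed
        have rP: "r \<in> P" using r_in_P[OF Sd g qd t(1) kqr(1)] .
        have rb: "\<forall>v. bad r v \<longrightarrow> rk v w"
        proof (intro allI impI)
          fix v assume bv: "bad r v"
          then have vr: "v \<in> dvars r" by (simp add: bad_def)
          have "w \<notin> dvars r" using bnd_0_notin[of w r] kqr(2) by simp
          then have "v \<noteq> w" using vr by blast
          show "rk v w"
          proof (cases "v \<in> dvars ?S \<union> dvars T")
            case True then show ?thesis using T(2) by blast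
          next
            case False
            then have vg: "v \<in> dvars g" using vr kqr(3) \<open>v \<noteq> w\<close> by blast
            have "bad g v" using bad_transfer[OF bv vg] kqr(5) \<open>v \<noteq> w\<close> False by blast
            then show ?thesis using bw \<open>v \<noteq> w\<close> by blast
          qed
        qed
        obtain l where "HH ^ l * r \<in> delta_ideal n m \<delta> L" using lower[OF rP rb] by blast
        moreover obtain J where "J \<in> dpolys n m" "HH = ?S * J" using HH_factor_S[OF f] by blast
        ultimately show ?thesis using finish qd t(1) kqr(1) by blast
      next
        case False
        then have wu: "w = ?u" and dle: "degree_in w f \<le> degree_in w g" using cases by auto
        let ?d = "degree_in w f"
        let ?I = "initial rk f"
        have d1: "1 \<le> ?d" using NC_deg[OF RK NCf] wu by simp
        obtain f0 where f0: "f = coeff_in w ?d f * dX w ^ ?d + f0" "bnd w (?d - 1) f0" "ks f0 \<subseteq> ks f"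
          using decomp[OF bnd_degree_in[of w f]] by blast
        have Ieq: "coeff_in w ?d f = ?I" using wu by (simp add: initial_def)
        have wI: "w \<notin> dvars ?I" using dvars_initial wu by blast
        have df0: "dvars f0 \<subseteq> dvars f" using f0(3) by (auto simp: dvars_def)
        have dI: "dvars ?I \<subseteq> dvars f" using dvars_initial by blast
        have Id: "?I \<in> dpolys n m" using IS_d[OF f] by blast
        obtain k q r where kqr: "?I ^ k * g = q * f + r" "bnd w (?d - 1) r"
          "dvars r \<subseteq> dvars g \<union> dvars ?I \<union> dvars f0 \<union> {w}"
          "dvars q \<subseteq> dvars g \<union> dvars ?I \<union> dvars f0 \<union> {w}"
          "\<forall>v M. v \<noteq> w \<longrightarrow> v \<notin> dvars ?I \<longrightarrow> v \<notin> dvars f0 \<longrightarrow> bnd v M g \<longrightarrow> bnd v M r"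
          using pseudo_div[of f ?I w ?d f0 "degree_in w g" g] f0(1,2) Ieq wI d1 bnd_degree_in[of w g]
          by auto
        have qd: "q \<in> dpolys n m"
          unfolding dpolys_iff
        proof
          fix v assume "v \<in> dvars q"
          then have "v \<in> dvars g \<union> dvars ?I \<union> dvars f0 \<union> {w}" using kqr(4) by (rule subsetD[rotated])
          moreover have "w \<in> dvars f" using wu NC_leader[OF RK NCf] by simp
          ultimately have "v \<in> dvars g \<or> v \<in> dvars f" using dI df0 by blast
          then show "valid_dvar n m v" using gd fd by (auto simp: dpolys_iff)
        qed
        have rP: "r \<in> P" using r_in_P[OF Id g qd delta_ideal.gen[OF f] kqr(1)] .
        have rb: "\<forall>v. bad r v \<longrightarrow> rk v w"
        proof (intro allI impI)
          fix v assume bv: "bad r v"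
          then have vr: "v \<in> dvars r" by (simp add: bad_def)
          show "rk v w"
          proof (cases "v = w")
            case True
            then obtain f' where f': "f' \<in> L" "proper_derivative w (leader rk f') \<or>
                (w = leader rk f' \<and> degree_in w f' \<le> degree_in w r)"
              using bv True unfolding bad_def by blast
            have "\<not> proper_derivative w (leader rk f')" using leader_not_proper[OF f f'(1)] wu by simp
            then have "w = leader rk f'" "degree_in w f' \<le> degree_in w r" using f'(2) by auto
            then have wl: "w = leader rk f'" and dl: "degree_in w f' \<le> degree_in w r" by auto
            have "leader rk f' = leader rk f" using wl wu by (metis)
            then have ff: "f' = f" by (rule leaders_distinct[OF f'(1) f])
            have "degree_in w r \<le> ?d - 1" using degree_in_le[of w r "?d - 1"] kqr(2) by (rule iffD2)
            then have "degree_in w f \<le> ?d - 1" using dl ff by (metis le_trans)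
            then have False using d1 by linarith
            then show ?thesis ..
          next
            case False
            show ?thesis
            proof (cases "v \<in> dvars ?I \<union> dvars f0")
              case True
              then have "v \<in> dvars f" using dI df0 by blast
              then have "v = ?u \<or> rk v ?u" by (rule NC_below[OF RK NCf])
              then show ?thesis using False wu by simp
            next
              case nf: False
              then have vg: "v \<in> dvars g" using vr kqr(3) False by blast
              have "bad g v" using bad_transfer[OF bv vg] kqr(5) False nf by blast
              then show ?thesis using bw False by blast
            qed
          qed
        qed
        obtain l where "HH ^ l * r \<in> delta_ideal n m \<delta> L" using lower[OF rP rb] by blast
        moreover obtain J where "J \<in> dpolys n m" "HH = ?I * J" using HH_factor_I[OF f] by blast
        ultimately show ?thesis using finish qd delta_ideal.gen[OF f] kqr(1) by blast
      qed
    qed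
  qed
qed

lemma ritt: "g \<in> P \<Longrightarrow> \<exists>l. HH ^ l * g \<in> delta_ideal n m \<delta> L"
proof (cases "\<exists>v. bad g v")
  case False
  assume "g \<in> P"
  then have "g = 0" using base False by blast
  then show ?thesis by (intro exI[of _ 0]) (simp add: delta_ideal.zero)
next
  case True
  assume g: "g \<in> P"
  have hd: "g \<in> dpolys n m" using g PD by blast
  have fin: "finite {v. bad g v}" by (rule finite_subset[of _ "dvars g"]) (auto simp: bad_def)
  have val: "\<forall>v\<in>{v. bad g v}. valid_dvar n m v" using hd by (auto simp: bad_def dpolys_iff)
  obtain w where w: "w \<in> {v. bad g v}" "\<forall>v\<in>{v. bad g v}. v \<noteq> w \<longrightarrow> rk v w"
    using max_exists[OF RK fin _ val] True by blast
  have "valid_dvar n m w" using val w(1) by blast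
  then show ?thesis using ritt_aux[of w] g w(2) by blast
qed

lemma HH_val:
  assumes "a \<in> zero_set n m \<delta> L - zero_set n m \<delta> {HH}"
  shows "a \<in> points n" "\<forall>f\<in>L. deval m \<delta> f a = 0" "deval m \<delta> HH a \<noteq> 0"
  using assms by (auto simp: zero_set_def)

lemma part1:
  assumes "a \<in> zero_set n m \<delta> L - zero_set n m \<delta> {HH}"
  shows "a \<in> zero_set n m \<delta> (saturation n m \<delta> L HH)"
  unfolding zero_set_def
proof (intro CollectI conjI ballI)
  show "a \<in> points n" using HH_val[OF assms] by blast
  fix f assume "f \<in> saturation n m \<delta> L HH"
  then obtain l where l: "HH ^ l * f \<in> delta_ideal n m \<delta> L" by (auto simp: saturation_def)
  have "deval m \<delta> (HH ^ l * f) a = 0"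
    using delta_ideal_vanish_deval[OF CD _ l] HH_val(2)[OF assms] by blast
  then have "deval m \<delta> HH a ^ l * deval m \<delta> f a = 0" by (simp add: deval_mult deval_power)
  then show "deval m \<delta> f a = 0" using HH_val(3)[OF assms] by simp
qed

lemma L_sat: "f \<in> L \<Longrightarrow> f \<in> saturation n m \<delta> L HH"
  unfolding saturation_def using LD delta_ideal.gen[of f L n m \<delta>]
  by (intro CollectI conjI exI[of _ 0]) auto

lemma main_equiv:
  assumes DC: "DCF m \<delta>" and a: "a \<in> zero_set n m \<delta> L - zero_set n m \<delta> {HH}" and b: "b \<in> points n"
  shows "(a, b) \<in> prolongation n m \<delta> D (zero_set n m \<delta> (saturation n m \<delta> L HH))
          \<longleftrightarrow> (a, b) \<in> tau_zero_set n m \<delta> D L"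
proof
  let ?V = "zero_set n m \<delta> (saturation n m \<delta> L HH)"
  assume "(a, b) \<in> prolongation n m \<delta> D ?V"
  then have ab: "a \<in> points n" "b \<in> points n"
    and all: "\<forall>f\<in>vanishing_ideal n m \<delta> ?V. deval m \<delta> f a = 0 \<and> tau_eval m \<delta> D f a b = 0"
    by (auto simp: prolongation_def tau_zero_set_def)
  have "\<forall>f\<in>L. f \<in> vanishing_ideal n m \<delta> ?V"
  proof
    fix f assume f: "f \<in> L"
    have "\<forall>a'\<in>?V. deval m \<delta> f a' = 0" using L_sat[OF f] by (auto simp: zero_set_def)
    then show "f \<in> vanishing_ideal n m \<delta> ?V" using LD f by (auto simp: vanishing_ideal_def)
  qed
  then show "(a, b) \<in> tau_zero_set n m \<delta> D L" using ab all by (auto simp: tau_zero_set_def)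
next
  let ?V = "zero_set n m \<delta> (saturation n m \<delta> L HH)"
  assume "(a, b) \<in> tau_zero_set n m \<delta> D L"
  then have ab: "a \<in> points n" "b \<in> points n"
    and allL: "\<forall>f\<in>L. deval m \<delta> f a = 0 \<and> tau_eval m \<delta> D f a b = 0"
    by (auto simp: tau_zero_set_def)
  have aV: "a \<in> ?V" by (rule part1[OF a])
  have dD: "is_derivation D" using CD by (simp add: commuting_derivations_def)
  have "\<forall>g\<in>vanishing_ideal n m \<delta> ?V. deval m \<delta> g a = 0 \<and> tau_eval m \<delta> D g a b = 0"
  proof
    fix g assume g: "g \<in> vanishing_ideal n m \<delta> ?V"
    then have gd: "g \<in> dpolys n m" and gv: "\<forall>a'\<in>?V. deval m \<delta> g a' = 0"
      by (auto simp: vanishing_ideal_def)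
    have ga: "deval m \<delta> g a = 0" using gv aV by blast
    have Hg: "HH * g \<in> dpolys n m" using dpolys_mult[OF HH_dpolys gd] .
    have "\<exists>k. (HH * g) ^ k \<in> delta_ideal n m \<delta> L"
    proof (rule ccontr)
      assume nk: "\<not> (\<exists>k. (HH * g) ^ k \<in> delta_ideal n m \<delta> L)"
      have "finite L \<longrightarrow> L \<subseteq> dpolys n m \<longrightarrow> HH * g \<in> dpolys n m \<longrightarrow>
          (\<forall>k. (HH * g) ^ k \<notin> delta_ideal n m \<delta> L) \<longrightarrow>
          (\<exists>a'\<in>points n. (\<forall>f\<in>L. deval m \<delta> f a' = 0) \<and> deval m \<delta> (HH * g) a' \<noteq> 0)"
        using DC unfolding DCF_def by blast
      then obtain a' where a': "a' \<in> points n" "\<forall>f\<in>L. deval m \<delta> f a' = 0" "deval m \<delta> (HH * g) a' \<noteq> 0"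
        using finL LD Hg nk by blast
      then have "deval m \<delta> HH a' \<noteq> 0" "deval m \<delta> g a' \<noteq> 0" by (auto simp: deval_mult)
      then have "a' \<in> zero_set n m \<delta> L - zero_set n m \<delta> {HH}" using a' by (auto simp: zero_set_def)
      then have "a' \<in> ?V" by (rule part1)
      then show False using gv \<open>deval m \<delta> g a' \<noteq> 0\<close> by blast
    qed
    then obtain k where "(HH * g) ^ k \<in> delta_ideal n m \<delta> L" by blast
    then have "(HH * g) ^ k \<in> P" by (rule IdP)
    then have "HH * g \<in> P" using prime_power[OF PR Hg] by blast
    then have "g \<in> P" using prime_prop[OF PR] HH_dpolys gd HH_notin by blast
    then obtain l where l: "HH ^ l * g \<in> delta_ideal n m \<delta> L" using ritt by blast
    have "tau_eval m \<delta> D (HH ^ l * g) a b = 0"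
      using delta_ideal_vanish[OF CD allL l] by blast
    then have "deval m \<delta> HH a ^ l * tau_eval m \<delta> D g a b = 0"
      using ga by (simp add: tau_mult[OF dD] deval_power)
    then have "tau_eval m \<delta> D g a b = 0" using HH_val(3)[OF a] by simp
    then show "deval m \<delta> g a = 0 \<and> tau_eval m \<delta> D g a b = 0" using ga by blast
  qed
  then show "(a, b) \<in> prolongation n m \<delta> D ?V" using ab by (auto simp: prolongation_def tau_zero_set_def)
qed

end

theorem mainTheorem2:
  fixes m n :: nat
    and \<delta> :: "nat \<Rightarrow> 'a::field_char_0 \<Rightarrow> 'a"
    and D :: "'a \<Rightarrow> 'a"
    and rk :: "dvar \<Rightarrow> dvar \<Rightarrow> bool"
    and P \<Lambda> :: "'a dpoly set"
    and a :: "nat \<Rightarrow> 'a"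
  assumes "commuting_derivations m \<delta> D"
    and "DCF m \<delta>"
    and "is_ranking n m rk"
    and "prime_delta_ideal n m \<delta> P"
    and "characteristic_set rk \<Lambda> P"
    and "a \<in> zero_set n m \<delta> \<Lambda> - zero_set n m \<delta> {H_of rk \<Lambda>}"
  shows "a \<in> zero_set n m \<delta> (saturation n m \<delta> \<Lambda> (H_of rk \<Lambda>)) \<and>
         (\<forall>b\<in>points n.
            (a, b) \<in> prolongation n m \<delta> D (zero_set n m \<delta> (saturation n m \<delta> \<Lambda> (H_of rk \<Lambda>)))
            \<longleftrightarrow> (a, b) \<in> tau_zero_set n m \<delta> D \<Lambda>)"
  using part1[OF assms(1,3,4,5,6)] main_equiv[OF assms(1,3,4,5,2,6)] by blast


end
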